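(* Let $(X=\{x_1,\dots,x_n\},d)$ be a finite metric space with $n\ge1$ points and $L$ the Lipschitz seminorm of $d$ on $C(X)$. Define $P_n:M_n\to C(X)$ by $P_n(A)(x_i)=A_{i,i}$ and $L_{o,n}(A)=\sup_{i\ne j}|A_{i,j}|$. For $\varepsilon>0$ set \[L_\varepsilon=\max\Big\{L\circ P_n,\ \frac{n^2-n}{2\varepsilon}L_{o,n}\Big\}.\] Then $L_\varepsilon$ is a Lip-norm on $M_n$ (i.e. on its self-adjoint part), and \[\operatorname{dist}_q\big((C(X),L),(M_n,L_\varepsilon)\big)\le\varepsilon.\]
   Context: $M_n$ is the algebra of $n\times n$ complex matrices; $A_{i,j}$ denotes the $(i,j)$ entry. The Lipschitz seminorm is $L(f)=\sup_{x\ne y}|f(x)-f(y)|/d(x,y)$. A Lip-norm on an order-unit space (here the self-adjoint part of a unital C*-algebra) is a seminorm $L$ vanishing exactly on scalar multiples of the unit such that $d_L(\mu,\nu)=\sup\{|\mu(a)-\nu(a)|:L(a)\le1\}$ induces the weak* topology on the state space. $\operatorname{dist}_q$ is Rieffel's quantum Gromov–Hausdorff distance: the infimum, over Lip-norms on the direct sum whose quotients are the given Lip-norms, of the Hausdorff distance for the dual metric between the two state spaces inside the state space of the direct sum. *)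

theory Defs
  imports "HOL-Analysis.Analysis"
begin

text \<open>Normalised to be 0
  outside V so that states are uniquely represented.\<close>
definition is_state :: "'v::real_vector set \<Rightarrow> ('v \<Rightarrow> bool) \<Rightarrow> 'v \<Rightarrow> ('v \<Rightarrow> real) \<Rightarrow> bool" where
  "is_state V pos e \<phi> \<longleftrightarrow>
     (\<forall>x\<in>V. \<forall>y\<in>V. \<phi> (x + y) = \<phi> x + \<phi> y) \<and>
     (\<forall>c. \<forall>x\<in>V. \<phi> (c *\<^sub>R x) = c * \<phi> x) \<and>
     (\<forall>x\<in>V. pos x \<longrightarrow> 0 \<le> \<phi> x) \<and>
     \<phi> e = 1 \<and>
     (\<forall>x. x \<notin> V \<longrightarrow> \<phi> x = 0)"

definition state_space :: "'v::real_vector set \<Rightarrow> ('v \<Rightarrow> bool) \<Rightarrow> 'v \<Rightarrow> ('v \<Rightarrow> real) set" where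
  "state_space V pos e = Collect (is_state V pos e)"

text \<open>The dual metric d_L (extended-real valued, so that it is total).\<close>
definition lip_dist :: "'v set \<Rightarrow> ('v \<Rightarrow> real) \<Rightarrow> ('v \<Rightarrow> real) \<Rightarrow> ('v \<Rightarrow> real) \<Rightarrow> ereal" where
  "lip_dist V L \<mu> \<nu> = (SUP a\<in>{a\<in>V. L a \<le> 1}. ereal \<bar>\<mu> a - \<nu> a\<bar>)"

definition weak_star_open :: "'v set \<Rightarrow> ('v \<Rightarrow> real) set \<Rightarrow> ('v \<Rightarrow> real) set \<Rightarrow> bool" where
  "weak_star_open V S U \<longleftrightarrow> U \<subseteq> S \<and>
     (\<forall>\<phi>\<in>U. \<exists>F. finite F \<and> F \<subseteq> V \<and>
        (\<exists>\<epsilon>>0. {\<psi>\<in>S. \<forall>a\<in>F. \<bar>\<psi> a - \<phi> a\<bar> < \<epsilon>} \<subseteq> U))"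

definition metric_open :: "'v set \<Rightarrow> ('v \<Rightarrow> real) \<Rightarrow> ('v \<Rightarrow> real) set \<Rightarrow> ('v \<Rightarrow> real) set \<Rightarrow> bool" where
  "metric_open V L S U \<longleftrightarrow> U \<subseteq> S \<and>
     (\<forall>\<phi>\<in>U. \<exists>\<epsilon>>0. {\<psi>\<in>S. lip_dist V L \<phi> \<psi> < ereal \<epsilon>} \<subseteq> U)"

definition is_seminorm_on :: "'v::real_vector set \<Rightarrow> ('v \<Rightarrow> real) \<Rightarrow> bool" where
  "is_seminorm_on V L \<longleftrightarrow>
     (\<forall>x\<in>V. \<forall>y\<in>V. L (x + y) \<le> L x + L y) \<and>
     (\<forall>c. \<forall>x\<in>V. L (c *\<^sub>R x) = \<bar>c\<bar> * L x)"

definition is_lip_norm :: "'v::real_vector set \<Rightarrow> ('v \<Rightarrow> bool) \<Rightarrow> 'v \<Rightarrow> ('v \<Rightarrow> real) \<Rightarrow> bool" where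
  "is_lip_norm V pos e L \<longleftrightarrow>
     is_seminorm_on V L \<and>
     (\<forall>a\<in>V. L a = 0 \<longleftrightarrow> (\<exists>t. a = t *\<^sub>R e)) \<and>
     (\<forall>\<mu>\<in>state_space V pos e. \<forall>\<nu>\<in>state_space V pos e. lip_dist V L \<mu> \<nu> < \<infinity>) \<and>
     (\<forall>U. weak_star_open V (state_space V pos e) U \<longleftrightarrow> metric_open V L (state_space V pos e) U)"

definition sum_pos :: "('a \<Rightarrow> bool) \<Rightarrow> ('b \<Rightarrow> bool) \<Rightarrow> 'a \<times> 'b \<Rightarrow> bool" where
  "sum_pos posA posB p \<longleftrightarrow> posA (fst p) \<and> posB (snd p)"

definition admissible ::
  "'a::real_vector set \<Rightarrow> ('a \<Rightarrow> bool) \<Rightarrow> 'a \<Rightarrow> ('a \<Rightarrow> real) \<Rightarrow>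
   'b::real_vector set \<Rightarrow> ('b \<Rightarrow> bool) \<Rightarrow> 'b \<Rightarrow> ('b \<Rightarrow> real) \<Rightarrow> ('a \<times> 'b \<Rightarrow> real) \<Rightarrow> bool" where
  "admissible VA posA eA LA VB posB eB LB L \<longleftrightarrow>
     is_lip_norm (VA \<times> VB) (sum_pos posA posB) (eA, eB) L \<and>
     (\<forall>a\<in>VA. LA a = Inf {L (a, b) | b. b \<in> VB}) \<and>
     (\<forall>b\<in>VB. LB b = Inf {L (a, b) | a. a \<in> VA})"

definition embed_fst :: "'a set \<Rightarrow> 'b set \<Rightarrow> ('a \<Rightarrow> real) \<Rightarrow> ('a \<times> 'b \<Rightarrow> real)" where
  "embed_fst VA VB \<phi> = (\<lambda>p. if p \<in> VA \<times> VB then \<phi> (fst p) else 0)"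

definition embed_snd :: "'a set \<Rightarrow> 'b set \<Rightarrow> ('b \<Rightarrow> real) \<Rightarrow> ('a \<times> 'b \<Rightarrow> real)" where
  "embed_snd VA VB \<phi> = (\<lambda>p. if p \<in> VA \<times> VB then \<phi> (snd p) else 0)"

definition hausdorff_dist :: "('s \<Rightarrow> 's \<Rightarrow> ereal) \<Rightarrow> 's set \<Rightarrow> 's set \<Rightarrow> ereal" where
  "hausdorff_dist d S1 S2 =
     max (SUP \<mu>\<in>S1. INF \<nu>\<in>S2. d \<mu> \<nu>) (SUP \<nu>\<in>S2. INF \<mu>\<in>S1. d \<mu> \<nu>)"

definition dist_q ::
  "'a::real_vector set \<Rightarrow> ('a \<Rightarrow> bool) \<Rightarrow> 'a \<Rightarrow> ('a \<Rightarrow> real) \<Rightarrow>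
   'b::real_vector set \<Rightarrow> ('b \<Rightarrow> bool) \<Rightarrow> 'b \<Rightarrow> ('b \<Rightarrow> real) \<Rightarrow> ereal" where
  "dist_q VA posA eA LA VB posB eB LB =
     (INF L\<in>{L. admissible VA posA eA LA VB posB eB LB L}.
        hausdorff_dist (lip_dist (VA \<times> VB) L)
          (embed_fst VA VB ` state_space VA posA eA)
          (embed_snd VA VB ` state_space VB posB eB))"

text \<open>X = {x_1..x_n} is indexed by the finite type 'n, so n = CARD('n) \<ge> 1.\<close>

definition posC :: "real^'n \<Rightarrow> bool" where
  "posC f \<longleftrightarrow> (\<forall>i. 0 \<le> f $ i)"

definition unitC :: "real^'n" where
  "unitC = (\<chi> i. 1)"

definition herm :: "(complex^'n^'n) set" where
  "herm = {A. \<forall>i j. A $ i $ j = cnj (A $ j $ i)}"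

definition psd :: "complex^'n^'n \<Rightarrow> bool" where
  "psd A \<longleftrightarrow> (\<forall>v :: complex^'n. 0 \<le> Re (\<Sum>i\<in>UNIV. \<Sum>j\<in>UNIV. cnj (v $ i) * A $ i $ j * v $ j))"

text \<open>Lipschitz seminorm (sup over the empty set read as 0 when n = 1).\<close>
definition lipschitz_seminorm :: "('n \<Rightarrow> 'n \<Rightarrow> real) \<Rightarrow> real^'n \<Rightarrow> real" where
  "lipschitz_seminorm d f = Sup (insert 0 {\<bar>f $ x - f $ y\<bar> / d x y | x y. x \<noteq> y})"

text \<open>P_n(A)(x_i) = A_{i,i} (real for self-adjoint A).\<close>
definition diag_map :: "complex^'n^'n \<Rightarrow> real^'n" where
  "diag_map A = (\<chi> i. Re (A $ i $ i))"

definition off_diag_norm :: "complex^'n^'n \<Rightarrow> real" where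
  "off_diag_norm A = Sup (insert 0 {cmod (A $ i $ j) | i j. i \<noteq> j})"

definition L_eps :: "('n::finite \<Rightarrow> 'n \<Rightarrow> real) \<Rightarrow> real \<Rightarrow> complex^'n^'n \<Rightarrow> real" where
  "L_eps d \<epsilon> A = max (lipschitz_seminorm d (diag_map A))
      ((real (CARD('n))^2 - real (CARD('n))) / (2 * \<epsilon>) * off_diag_norm A)"

end

theory Submission
  imports Defs
begin

definition sub :: "'v::real_vector set \<Rightarrow> bool" where
  "sub V \<longleftrightarrow> 0 \<in> V \<and> (\<forall>x\<in>V. \<forall>y\<in>V. x + y \<in> V) \<and> (\<forall>c. \<forall>x\<in>V. c *\<^sub>R x \<in> V)"

definition lin_on :: "'v::real_vector set \<Rightarrow> ('v \<Rightarrow> real) \<Rightarrow> bool" where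
  "lin_on V \<phi> \<longleftrightarrow> (\<forall>x\<in>V. \<forall>y\<in>V. \<phi> (x + y) = \<phi> x + \<phi> y) \<and> (\<forall>c. \<forall>x\<in>V. \<phi> (c *\<^sub>R x) = c * \<phi> x)"

lemma state_lin: "is_state V pos e \<phi> \<Longrightarrow> lin_on V \<phi>"
  unfolding is_state_def lin_on_def by blast

lemma sub_sum: assumes "sub V" "\<forall>i\<in>I. x i \<in> V" shows "sum x I \<in> V"
proof (cases "finite I")
  case True then show ?thesis using assms(2)
    by (induction I rule: finite_induct) (use assms(1) in \<open>auto simp: sub_def\<close>)
next
  case False then show ?thesis using assms(1) by (simp add: sub_def)
qed

lemma lin_on_sum: assumes "sub V" "lin_on V \<phi>" "finite I" "\<forall>i\<in>I. x i \<in> V"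
  shows "\<phi> (sum x I) = (\<Sum>i\<in>I. \<phi> (x i))"
  using assms(3,4)
proof (induction I rule: finite_induct)
  case empty
  have "0 \<in> V" using assms(1) by (simp add: sub_def)
  then have "\<phi> ((0::real) *\<^sub>R 0) = 0 * \<phi> 0" using assms(2) unfolding lin_on_def by blast
  then show ?case by simp
next
  case (insert a F)
  have "sum x F \<in> V" using sub_sum[OF assms(1)] insert by auto
  then show ?case using insert assms(2) unfolding lin_on_def by simp
qed

lemma lin_on_diff: "lin_on V \<phi> \<Longrightarrow> x \<in> V \<Longrightarrow> y \<in> V \<Longrightarrow> sub V \<Longrightarrow> \<phi> (x - y) = \<phi> x - \<phi> y"
proof -
  assume a: "lin_on V \<phi>" "x \<in> V" "y \<in> V" "sub V"
  have "- y \<in> V" using a unfolding sub_def by (metis scaleR_minus1_left)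
  then have "\<phi> (x + - y) = \<phi> x + \<phi> (- y)" using a unfolding lin_on_def by blast
  moreover have "\<phi> ((-1) *\<^sub>R y) = - \<phi> y" using a unfolding lin_on_def by (metis mult_minus1)
  ultimately show ?thesis by simp
qed

lemma seminorm_nonneg: assumes "is_seminorm_on V L" "x \<in> V" "sub V" shows "0 \<le> L x"
proof -
  have m: "- x \<in> V" using assms unfolding sub_def by (metis scaleR_minus1_left)
  have "L (x + - x) \<le> L x + L (- x)" using assms m unfolding is_seminorm_on_def by blast
  moreover have "L ((-1) *\<^sub>R x) = L x" using assms unfolding is_seminorm_on_def by (metis abs_neg_one mult_1)
  moreover have "L 0 = 0" using assms unfolding is_seminorm_on_def by (metis abs_zero mult_zero_left scale_zero_left)
  ultimately show ?thesis by simp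
qed

lemma key1:
  assumes sV: "sub V" and eV: "e \<in> V" and sn: "is_seminorm_on V L"
    and ker: "\<forall>a\<in>V. L a = 0 \<longleftrightarrow> (\<exists>t. a = t *\<^sub>R e)"
    and l1: "lin_on V \<phi>" "\<phi> e = 1" and l2: "lin_on V \<psi>" "\<psi> e = 1"
    and aV: "a \<in> V" and h: "\<And>b. b \<in> V \<Longrightarrow> L b = 1 \<Longrightarrow> \<bar>\<phi> b - \<psi> b\<bar> \<le> \<eta>"
  shows "\<bar>\<psi> a - \<phi> a\<bar> \<le> L a * \<eta>"
  proof (cases "L a = 0")
    case True
    then obtain t where t: "a = t *\<^sub>R e" using ker aV by blast
    have "\<phi> a = t" "\<psi> a = t" using l1 l2 eV unfolding t lin_on_def by auto
    then show ?thesis using True by simp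
  next
    case False
    have Lp: "L a > 0" using seminorm_nonneg[OF sn aV sV] False by simp
    define a' where "a' = (1 / L a) *\<^sub>R a"
    have a'V: "a' \<in> V" using sV aV unfolding a'_def sub_def by blast
    have "L a' = \<bar>1 / L a\<bar> * L a" using sn aV unfolding a'_def is_seminorm_on_def by blast
    then have La': "L a' = 1" using Lp by simp
    have h: "\<bar>\<phi> a' - \<psi> a'\<bar> \<le> \<eta>" using h[OF a'V La'] .
    have "\<phi> a' = (1 / L a) * \<phi> a" "\<psi> a' = (1 / L a) * \<psi> a"
      using l1(1) l2(1) aV unfolding a'_def lin_on_def by blast+
    then have "\<bar>(\<phi> a - \<psi> a) / L a\<bar> \<le> \<eta>" using h by (simp add: diff_divide_distrib)
    then have "\<bar>\<phi> a - \<psi> a\<bar> / L a \<le> \<eta>" using Lp by simp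
    then have "\<bar>\<phi> a - \<psi> a\<bar> \<le> \<eta> * L a" using Lp by (simp add: divide_le_eq)
    then show ?thesis by (simp add: abs_minus_commute mult.commute)
  qed

lemma generic_lip_norm:
  fixes V :: "'v::real_vector set"
  assumes sV: "sub V" and eV: "e \<in> V" and sn: "is_seminorm_on V L"
    and ker: "\<forall>a\<in>V. L a = 0 \<longleftrightarrow> (\<exists>t. a = t *\<^sub>R e)"
    and fF: "finite F" and FV: "F \<subseteq> V" and C0: "0 \<le> C"
    and bd: "\<And>\<phi> \<psi> a. \<phi> \<in> state_space V pos e \<Longrightarrow> \<psi> \<in> state_space V pos e \<Longrightarrow> a \<in> V \<Longrightarrow> L a \<le> 1 \<Longrightarrow>
              \<bar>\<phi> a - \<psi> a\<bar> \<le> C * (\<Sum>b\<in>F. \<bar>\<phi> b - \<psi> b\<bar>)"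
  shows "is_lip_norm V pos e L"
proof -
  let ?S = "state_space V pos e"
  have ldb: "lip_dist V L \<phi> \<psi> \<le> ereal (C * (\<Sum>b\<in>F. \<bar>\<phi> b - \<psi> b\<bar>))"
    if "\<phi> \<in> ?S" "\<psi> \<in> ?S" for \<phi> \<psi>
    unfolding lip_dist_def using bd[OF that] by (auto intro!: SUP_least)
  have fin: "\<forall>\<mu>\<in>?S. \<forall>\<nu>\<in>?S. lip_dist V L \<mu> \<nu> < \<infinity>"
  proof (intro ballI)
    fix \<mu> \<nu> assume "\<mu> \<in> ?S" "\<nu> \<in> ?S"
    from ldb[OF this] show "lip_dist V L \<mu> \<nu> < \<infinity>"
      by (rule order.strict_trans1) simp
  qed
  have lb: "ereal \<bar>\<phi> a - \<psi> a\<bar> \<le> lip_dist V L \<phi> \<psi>" if "a \<in> V" "L a \<le> 1" for \<phi> \<psi> a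
    unfolding lip_dist_def using that by (auto intro!: SUP_upper)
  have stlin: "lin_on V \<phi>" "\<phi> e = 1" if "\<phi> \<in> ?S" for \<phi>
    using that by (auto simp: state_space_def is_state_def lin_on_def)
  have key1: "\<bar>\<psi> a - \<phi> a\<bar> \<le> L a * \<eta>"
    if "\<phi> \<in> ?S" "\<psi> \<in> ?S" "a \<in> V" "lip_dist V L \<phi> \<psi> < ereal \<eta>" for \<phi> \<psi> a \<eta>
  proof (rule key1[OF sV eV sn ker stlin[OF that(1)] stlin[OF that(2)] that(3)])
    fix b assume "b \<in> V" "L b = 1"
    then have "ereal \<bar>\<phi> b - \<psi> b\<bar> \<le> lip_dist V L \<phi> \<psi>" using lb[of b \<phi> \<psi>] by simp
    then have "ereal \<bar>\<phi> b - \<psi> b\<bar> < ereal \<eta>" using that(4) by (rule order.strict_trans1)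
    then show "\<bar>\<phi> b - \<psi> b\<bar> \<le> \<eta>" by simp
  qed
  have top: "weak_star_open V ?S U \<longleftrightarrow> metric_open V L ?S U" for U
  proof
    assume w: "weak_star_open V ?S U"
    show "metric_open V L ?S U" unfolding metric_open_def
    proof (intro conjI ballI)
      show "U \<subseteq> ?S" using w weak_star_open_def by blast
      fix \<phi> assume pU: "\<phi> \<in> U"
      then obtain G \<epsilon> where G: "finite G" "G \<subseteq> V" "\<epsilon> > 0"
        "{\<psi>\<in>?S. \<forall>a\<in>G. \<bar>\<psi> a - \<phi> a\<bar> < \<epsilon>} \<subseteq> U"
        using w unfolding weak_star_open_def by blast
      define M where "M = (\<Sum>a\<in>G. L a)"
      have LM: "L a \<le> M" if "a \<in> G" for a
        unfolding M_def using G that seminorm_nonneg[OF sn _ sV]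
        by (intro member_le_sum) auto
      have M0: "0 \<le> M" unfolding M_def using G seminorm_nonneg[OF sn _ sV] by (intro sum_nonneg) auto
      define \<eta> where "\<eta> = \<epsilon> / (M + 1)"
      have \<eta>0: "\<eta> > 0" using G M0 by (simp add: \<eta>_def)
      have M\<eta>: "M * \<eta> < \<epsilon>" using G M0 unfolding \<eta>_def by (simp add: field_simps)
      show "\<exists>\<epsilon>>0. {\<psi> \<in> ?S. lip_dist V L \<phi> \<psi> < ereal \<epsilon>} \<subseteq> U"
      proof (intro exI conjI)
        show "\<eta> > 0" by (rule \<eta>0)
        show "{\<psi> \<in> ?S. lip_dist V L \<phi> \<psi> < ereal \<eta>} \<subseteq> U"
        proof
          fix \<psi> assume "\<psi> \<in> {\<psi> \<in> ?S. lip_dist V L \<phi> \<psi> < ereal \<eta>}"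
          then have ps: "\<psi> \<in> ?S" "lip_dist V L \<phi> \<psi> < ereal \<eta>" by auto
          have pS: "\<phi> \<in> ?S" using pU w weak_star_open_def by blast
          have "\<bar>\<psi> a - \<phi> a\<bar> < \<epsilon>" if aG: "a \<in> G" for a
          proof -
            have aV: "a \<in> V" using aG G by auto
            have "\<bar>\<psi> a - \<phi> a\<bar> \<le> L a * \<eta>" using key1[OF pS ps(1) aV ps(2)] .
            also have "\<dots> \<le> M * \<eta>" using LM[OF aG] \<eta>0 by (simp add: mult_right_mono)
            finally show ?thesis using M\<eta> by simp
          qed
          then show "\<psi> \<in> U" using G(4) ps(1) by blast
        qed
      qed
    qed
  next
    assume m: "metric_open V L ?S U"
    show "weak_star_open V ?S U" unfolding weak_star_open_def
    proof (intro conjI ballI)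
      show "U \<subseteq> ?S" using m metric_open_def by blast
      fix \<phi> assume pU: "\<phi> \<in> U"
      have pS: "\<phi> \<in> ?S" using pU m metric_open_def by blast
      obtain \<epsilon> where e: "\<epsilon> > 0" "{\<psi>\<in>?S. lip_dist V L \<phi> \<psi> < ereal \<epsilon>} \<subseteq> U"
        using m pU unfolding metric_open_def by blast
      define \<delta> where "\<delta> = \<epsilon> / (C * card F + 1)"
      have d0: "\<delta> > 0" using e C0 by (simp add: \<delta>_def add_nonneg_pos)
      have pos: "C * card F + 1 > 0" using C0 by (simp add: add_nonneg_pos)
      have "C * (card F * \<delta>) = \<epsilon> * ((C * card F) / (C * card F + 1))" unfolding \<delta>_def by simp
      also have "\<dots> < \<epsilon> * 1" using pos e by (intro mult_strict_left_mono) auto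
      finally have Cd: "C * (card F * \<delta>) < \<epsilon>" by simp
      show "\<exists>G. finite G \<and> G \<subseteq> V \<and> (\<exists>\<epsilon>>0. {\<psi> \<in> ?S. \<forall>a\<in>G. \<bar>\<psi> a - \<phi> a\<bar> < \<epsilon>} \<subseteq> U)"
      proof (intro exI conjI)
        show "finite F" "F \<subseteq> V" "\<delta> > 0" using fF FV d0 by auto
        show "{\<psi> \<in> ?S. \<forall>a\<in>F. \<bar>\<psi> a - \<phi> a\<bar> < \<delta>} \<subseteq> U"
        proof
          fix \<psi> assume "\<psi> \<in> {\<psi> \<in> ?S. \<forall>a\<in>F. \<bar>\<psi> a - \<phi> a\<bar> < \<delta>}"
          then have ps: "\<psi> \<in> ?S" "\<forall>a\<in>F. \<bar>\<psi> a - \<phi> a\<bar> < \<delta>" by auto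
          have "(\<Sum>b\<in>F. \<bar>\<phi> b - \<psi> b\<bar>) \<le> card F * \<delta>"
            using sum_bounded_above[of F "\<lambda>b. \<bar>\<phi> b - \<psi> b\<bar>" \<delta>] ps(2)
            by (simp add: abs_minus_commute less_imp_le)
          then have "C * (\<Sum>b\<in>F. \<bar>\<phi> b - \<psi> b\<bar>) \<le> C * (card F * \<delta>)" using C0 by (simp add: mult_left_mono)
          then have "C * (\<Sum>b\<in>F. \<bar>\<phi> b - \<psi> b\<bar>) < \<epsilon>" using Cd by linarith
          then have "ereal (C * (\<Sum>b\<in>F. \<bar>\<phi> b - \<psi> b\<bar>)) < ereal \<epsilon>" by simp
          then have "lip_dist V L \<phi> \<psi> < ereal \<epsilon>" using ldb[OF pS ps(1)]
            by (metis order.strict_trans1)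
          then show "\<psi> \<in> U" using e ps by blast
        qed
      qed
    qed
  qed
  show ?thesis unfolding is_lip_norm_def using sn ker fin top by blast
qed

lemma sup0_ge: "finite S \<Longrightarrow> x \<in> S \<Longrightarrow> x \<le> Sup (insert 0 S)" for S :: "real set"
  by (intro cSup_upper) (auto intro: bdd_above_finite)
lemma sup0_nonneg: "finite S \<Longrightarrow> 0 \<le> Sup (insert 0 S)" for S :: "real set"
  by (intro cSup_upper) (auto intro: bdd_above_finite)
lemma sup0_le: "0 \<le> M \<Longrightarrow> (\<And>x. x \<in> S \<Longrightarrow> x \<le> M) \<Longrightarrow> Sup (insert 0 S) \<le> M" for S :: "real set"
  by (intro cSup_least) auto

lemma fin_lipset: "finite {\<bar>f $ x - f $ y\<bar> / d x y | x y. x \<noteq> y}" for f :: "real^'n::finite"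
proof -
  have "{\<bar>f $ x - f $ y\<bar> / d x y | x y. x \<noteq> y} \<subseteq> (\<lambda>(x,y). \<bar>f $ x - f $ y\<bar> / d x y) ` UNIV" by auto
  then show ?thesis by (rule finite_subset) simp
qed

lemma fin_odset: "finite {cmod (A $ i $ j) | i j. i \<noteq> j}" for A :: "complex^'n::finite^'n"
proof -
  have "{cmod (A $ i $ j) | i j. i \<noteq> j} \<subseteq> (\<lambda>(i,j). cmod (A $ i $ j)) ` UNIV" by auto
  then show ?thesis by (rule finite_subset) simp
qed

lemma LS_nonneg: "0 \<le> lipschitz_seminorm d f"
  unfolding lipschitz_seminorm_def by (rule sup0_nonneg[OF fin_lipset])
lemma LS_ge: "x \<noteq> y \<Longrightarrow> \<bar>f $ x - f $ y\<bar> / d x y \<le> lipschitz_seminorm d f"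
  unfolding lipschitz_seminorm_def by (rule sup0_ge[OF fin_lipset]) auto
lemma LS_le: "0 \<le> M \<Longrightarrow> (\<And>x y. x \<noteq> y \<Longrightarrow> \<bar>f $ x - f $ y\<bar> / d x y \<le> M) \<Longrightarrow> lipschitz_seminorm d f \<le> M"
  unfolding lipschitz_seminorm_def by (rule sup0_le) auto

lemma ODN_nonneg: "0 \<le> off_diag_norm A"
  unfolding off_diag_norm_def by (rule sup0_nonneg[OF fin_odset])
lemma ODN_ge: "i \<noteq> j \<Longrightarrow> cmod (A $ i $ j) \<le> off_diag_norm A"
  unfolding off_diag_norm_def by (rule sup0_ge[OF fin_odset]) auto
lemma ODN_le: "0 \<le> M \<Longrightarrow> (\<And>i j. i \<noteq> j \<Longrightarrow> cmod (A $ i $ j) \<le> M) \<Longrightarrow> off_diag_norm A \<le> M"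
  unfolding off_diag_norm_def by (rule sup0_le) auto

locale metr =
  fixes d :: "'n::finite \<Rightarrow> 'n \<Rightarrow> real"
  assumes d0: "\<forall>x y. d x y = 0 \<longleftrightarrow> x = y"
    and dsym: "\<forall>x y. d x y = d y x"
    and dtri: "\<forall>x y z. d x z \<le> d x y + d y z"
begin

lemma dnn: "0 \<le> d x y"
proof -
  have "d x x = 0" using d0 by simp
  moreover have "d x x \<le> d x y + d y x" using dtri by blast
  moreover have "d y x = d x y" using dsym by simp
  ultimately show ?thesis by linarith
qed

lemma dpos: "x \<noteq> y \<Longrightarrow> 0 < d x y"
  using dnn[of x y] d0 by (auto simp: less_le)

lemma LS_lip: "\<bar>f $ x - f $ y\<bar> \<le> lipschitz_seminorm d f * d x y"
proof (cases "x = y")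
  case False
  then have "\<bar>f $ x - f $ y\<bar> / d x y \<le> lipschitz_seminorm d f" by (rule LS_ge)
  then show ?thesis using dpos[OF False] by (simp add: divide_le_eq)
next
  case True
  have "0 \<le> lipschitz_seminorm d f * d y y" using LS_nonneg[of d f] dnn[of y y] by (rule mult_nonneg_nonneg)
  then show ?thesis using True by simp
qed

lemma LS_seminorm: "is_seminorm_on UNIV (lipschitz_seminorm d)"
proof -
  have tri: "lipschitz_seminorm d (f + g) \<le> lipschitz_seminorm d f + lipschitz_seminorm d g" for f g
  proof (rule LS_le)
    show "0 \<le> lipschitz_seminorm d f + lipschitz_seminorm d g" using LS_nonneg[of d f] LS_nonneg[of d g] by simp
    fix x y :: 'n assume xy: "x \<noteq> y"
    have "\<bar>(f + g) $ x - (f + g) $ y\<bar> \<le> \<bar>f $ x - f $ y\<bar> + \<bar>g $ x - g $ y\<bar>" by simp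
    also have "\<dots> \<le> (lipschitz_seminorm d f + lipschitz_seminorm d g) * d x y"
      using LS_lip[of f x y] LS_lip[of g x y] by (simp add: distrib_right)
    finally show "\<bar>(f + g) $ x - (f + g) $ y\<bar> / d x y \<le> lipschitz_seminorm d f + lipschitz_seminorm d g"
      using dpos[OF xy] by (simp add: divide_le_eq)
  qed
  have hle: "lipschitz_seminorm d (c *\<^sub>R f) \<le> \<bar>c\<bar> * lipschitz_seminorm d f" for c f
  proof (rule LS_le)
    show "0 \<le> \<bar>c\<bar> * lipschitz_seminorm d f" using LS_nonneg[of d f] by simp
    fix x y :: 'n assume xy: "x \<noteq> y"
    have "\<bar>(c *\<^sub>R f) $ x - (c *\<^sub>R f) $ y\<bar> = \<bar>c\<bar> * \<bar>f $ x - f $ y\<bar>"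
      by (simp add: abs_mult[symmetric] right_diff_distrib)
    also have "\<dots> \<le> \<bar>c\<bar> * (lipschitz_seminorm d f * d x y)" using LS_lip[of f x y] by (simp add: mult_left_mono)
    finally show "\<bar>(c *\<^sub>R f) $ x - (c *\<^sub>R f) $ y\<bar> / d x y \<le> \<bar>c\<bar> * lipschitz_seminorm d f"
      using dpos[OF xy] by (simp add: divide_le_eq mult.assoc)
  qed
  have hom: "lipschitz_seminorm d (c *\<^sub>R f) = \<bar>c\<bar> * lipschitz_seminorm d f" for c f
  proof (cases "c = 0")
    case True
    then show ?thesis using hle[of 0 f] LS_nonneg[of d "0 *\<^sub>R f"] by simp
  next
    case False
    have "lipschitz_seminorm d f = lipschitz_seminorm d ((1/c) *\<^sub>R (c *\<^sub>R f))" using False by simp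
    also have "\<dots> \<le> \<bar>1/c\<bar> * lipschitz_seminorm d (c *\<^sub>R f)" by (rule hle)
    finally have "\<bar>c\<bar> * lipschitz_seminorm d f \<le> lipschitz_seminorm d (c *\<^sub>R f)"
      using False by (simp add: field_simps)
    then show ?thesis using hle[of c f] by simp
  qed
  show ?thesis unfolding is_seminorm_on_def using tri hom by blast
qed

lemma LS_zero: "lipschitz_seminorm d f = 0 \<Longrightarrow> f $ x = f $ y"
  using LS_lip[of f x y] by simp

lemma LS_const: "lipschitz_seminorm d (c *\<^sub>R unitC) = 0"
proof -
  have "lipschitz_seminorm d (c *\<^sub>R unitC) \<le> 0" by (rule LS_le) (auto simp: unitC_def)
  then show ?thesis using LS_nonneg[of d "c *\<^sub>R unitC"] by simp
qed

end

lemma ODN_seminorm: "is_seminorm_on V off_diag_norm"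
proof -
  have tri: "off_diag_norm (A + B) \<le> off_diag_norm A + off_diag_norm B" for A B :: "complex^'n^'n"
  proof (rule ODN_le)
    show "0 \<le> off_diag_norm A + off_diag_norm B" using ODN_nonneg[of A] ODN_nonneg[of B] by simp
    fix i j :: 'n assume ij: "i \<noteq> j"
    have "cmod ((A + B) $ i $ j) \<le> cmod (A $ i $ j) + cmod (B $ i $ j)" by (simp add: norm_triangle_ineq)
    then show "cmod ((A + B) $ i $ j) \<le> off_diag_norm A + off_diag_norm B"
      using ODN_ge[OF ij, of A] ODN_ge[OF ij, of B] by linarith
  qed
  have hle: "off_diag_norm (c *\<^sub>R A) \<le> \<bar>c\<bar> * off_diag_norm A" for c and A :: "complex^'n^'n"
  proof (rule ODN_le)
    show "0 \<le> \<bar>c\<bar> * off_diag_norm A" using ODN_nonneg[of A] by simp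
    fix i j :: 'n assume ij: "i \<noteq> j"
    show "cmod ((c *\<^sub>R A) $ i $ j) \<le> \<bar>c\<bar> * off_diag_norm A"
      using ODN_ge[OF ij, of A] by (simp add: mult_left_mono)
  qed
  have hom: "off_diag_norm (c *\<^sub>R A) = \<bar>c\<bar> * off_diag_norm A" for c and A :: "complex^'n^'n"
  proof (cases "c = 0")
    case True
    then show ?thesis using hle[of 0 A] ODN_nonneg[of "0 *\<^sub>R A"] by simp
  next
    case False
    have "off_diag_norm A = off_diag_norm ((1/c) *\<^sub>R (c *\<^sub>R A))" using False by simp
    also have "\<dots> \<le> \<bar>1/c\<bar> * off_diag_norm (c *\<^sub>R A)" by (rule hle)
    finally have "\<bar>c\<bar> * off_diag_norm A \<le> off_diag_norm (c *\<^sub>R A)"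
      using False by (simp add: field_simps)
    then show ?thesis using hle[of c A] by simp
  qed
  show ?thesis unfolding is_seminorm_on_def using tri hom by blast
qed

lemma sn_comp: assumes "is_seminorm_on UNIV L" "\<And>x y. P (x + y) = P x + P y" "\<And>c x. P (c *\<^sub>R x) = c *\<^sub>R P x"
  shows "is_seminorm_on V (\<lambda>x. L (P x))"
  using assms unfolding is_seminorm_on_def by simp

lemma sn_scale: assumes "is_seminorm_on V L" "0 \<le> k" shows "is_seminorm_on V (\<lambda>x. k * L x)"
  unfolding is_seminorm_on_def
proof (intro conjI ballI allI)
  fix x y assume "x \<in> V" "y \<in> V"
  then have "L (x + y) \<le> L x + L y" using assms(1) unfolding is_seminorm_on_def by blast
  then show "k * L (x + y) \<le> k * L x + k * L y" using assms(2) by (metis distrib_left mult_left_mono)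
next
  fix c x assume "x \<in> V"
  then show "k * L (c *\<^sub>R x) = \<bar>c\<bar> * (k * L x)" using assms(1) unfolding is_seminorm_on_def by simp
qed

lemma sn_max: "is_seminorm_on V L1 \<Longrightarrow> is_seminorm_on V L2 \<Longrightarrow> is_seminorm_on V (\<lambda>x. max (L1 x) (L2 x))"
  unfolding is_seminorm_on_def
proof (intro conjI ballI allI; (elim conjE)?)
  fix x y assume "x \<in> V" "y \<in> V" "\<forall>x\<in>V. \<forall>y\<in>V. L1 (x + y) \<le> L1 x + L1 y"
     "\<forall>x\<in>V. \<forall>y\<in>V. L2 (x + y) \<le> L2 x + L2 y"
  then have "L1 (x + y) \<le> L1 x + L1 y" "L2 (x + y) \<le> L2 x + L2 y" by blast+
  then show "max (L1 (x + y)) (L2 (x + y)) \<le> max (L1 x) (L2 x) + max (L1 y) (L2 y)" by linarith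
next
  fix c x assume "x \<in> V" "\<forall>c. \<forall>x\<in>V. L1 (c *\<^sub>R x) = \<bar>c\<bar> * L1 x" "\<forall>c. \<forall>x\<in>V. L2 (c *\<^sub>R x) = \<bar>c\<bar> * L2 x"
  then show "max (L1 (c *\<^sub>R x)) (L2 (c *\<^sub>R x)) = \<bar>c\<bar> * max (L1 x) (L2 x)"
    by (simp add: max_mult_distrib_left)
qed

lemma sn_norm: "is_seminorm_on V norm"
  unfolding is_seminorm_on_def by (simp add: norm_triangle_ineq)

lemma diag_map_add: "diag_map (A + B) = diag_map A + diag_map B"
  by (simp add: diag_map_def vec_eq_iff)
lemma diag_map_scale: "diag_map (c *\<^sub>R A) = c *\<^sub>R diag_map A"
  by (simp add: diag_map_def vec_eq_iff)

lemma dsum1: "(\<Sum>p\<in>UNIV. \<Sum>q\<in>UNIV. if r = p \<and> s = q then f p q else 0) = (f r s :: 'a::comm_monoid_add)"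
  for r s :: "'n::finite"
proof -
  have "(\<Sum>p\<in>UNIV. \<Sum>q\<in>UNIV. if r = p \<and> s = q then f p q else 0) = (\<Sum>p\<in>UNIV. if r = p then f p s else 0)"
    by (intro sum.cong refl) (auto simp: sum.delta)
  also have "\<dots> = f r s" by (simp add: sum.delta)
  finally show ?thesis .
qed

lemma dsum2: "(\<Sum>p\<in>UNIV. \<Sum>q\<in>UNIV. if r = q \<and> s = p then f p q else 0) = (f s r :: 'a::comm_monoid_add)"
  for r s :: "'n::finite"
proof -
  have "(\<Sum>p\<in>UNIV. \<Sum>q\<in>UNIV. if r = q \<and> s = p then f p q else 0) = (\<Sum>p\<in>UNIV. if s = p then f p r else 0)"
    by (intro sum.cong refl) (auto simp: sum.delta)
  also have "\<dots> = f s r" by (simp add: sum.delta)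
  finally show ?thesis .
qed

definition Hm :: "'n::finite \<Rightarrow> 'n \<Rightarrow> complex^'n^'n" where
  "Hm p q = (\<chi> r s. (if r = p \<and> s = q then 1 else 0) + (if r = q \<and> s = p then 1 else 0))"
definition Km :: "'n::finite \<Rightarrow> 'n \<Rightarrow> complex^'n^'n" where
  "Km p q = (\<chi> r s. (if r = p \<and> s = q then \<i> else 0) - (if r = q \<and> s = p then \<i> else 0))"
definition Tm :: "'n::finite \<Rightarrow> 'n \<Rightarrow> complex \<Rightarrow> complex^'n^'n" where
  "Tm p q a = (\<chi> r s. (if r = p \<and> s = q then a else 0) + (if r = q \<and> s = p then cnj a else 0))"
definition dg :: "real^'n::finite \<Rightarrow> complex^'n^'n" where
  "dg f = (\<chi> i j. if i = j then complex_of_real (f $ i) else 0)"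

lemma sub_UNIV: "sub UNIV" by (simp add: sub_def)

lemma herm_sym: "A \<in> herm \<Longrightarrow> A $ i $ j = cnj (A $ j $ i)"
  unfolding herm_def by blast

lemma hermI: "(\<And>i j. A $ i $ j = cnj (A $ j $ i)) \<Longrightarrow> A \<in> herm"
  unfolding herm_def by blast

lemma sub_herm: "sub herm"
  unfolding sub_def
proof (intro conjI ballI allI)
  show "0 \<in> herm" by (rule hermI) simp
  fix x y :: "complex^'n^'n" assume x: "x \<in> herm" and y: "y \<in> herm"
  show "x + y \<in> herm"
  proof (rule hermI)
    fix i j
    have "x $ i $ j = cnj (x $ j $ i)" "y $ i $ j = cnj (y $ j $ i)" using x y by (blast intro: herm_sym)+
    then show "(x + y) $ i $ j = cnj ((x + y) $ j $ i)" by simp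
  qed
next
  fix c and x :: "complex^'n^'n" assume x: "x \<in> herm"
  show "c *\<^sub>R x \<in> herm"
  proof (rule hermI)
    fix i j
    have "x $ i $ j = cnj (x $ j $ i)" using x by (blast intro: herm_sym)
    then show "(c *\<^sub>R x) $ i $ j = cnj ((c *\<^sub>R x) $ j $ i)" by (simp add: complex_cnj_scaleR)
  qed
qed

lemma herm_mat1: "mat 1 \<in> herm" by (rule hermI) (simp add: mat_def)
lemma Hm_herm: "Hm p q \<in> herm"
proof (rule hermI)
  fix i j
  show "(Hm p q) $ i $ j = cnj ((Hm p q) $ j $ i)"
    unfolding Hm_def by (cases "i = p"; cases "j = q"; cases "i = q"; cases "j = p") simp_all
qed
lemma Km_herm: "Km p q \<in> herm"
proof (rule hermI)
  fix i j
  show "(Km p q) $ i $ j = cnj ((Km p q) $ j $ i)"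
    unfolding Km_def by (cases "i = p"; cases "j = q"; cases "i = q"; cases "j = p") simp_all
qed
lemma Tm_herm: "Tm p q a \<in> herm"
proof (rule hermI)
  fix i j
  show "(Tm p q a) $ i $ j = cnj ((Tm p q a) $ j $ i)"
    unfolding Tm_def by (cases "i = p"; cases "j = q"; cases "i = q"; cases "j = p") simp_all
qed
lemma dg_herm: "dg f \<in> herm"
proof (rule hermI)
  fix i j
  show "dg f $ i $ j = cnj (dg f $ j $ i)" unfolding dg_def by (cases "i = j") simp_all
qed

lemma herm_diag: assumes "A \<in> herm" shows "A $ i $ i = complex_of_real (Re (A $ i $ i))"
proof -
  have "A $ i $ i = cnj (A $ i $ i)" using herm_sym[OF assms] .
  then have "Im (A $ i $ i) = 0" by (simp add: complex_eq_iff)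
  then show ?thesis by (simp add: complex_eq_iff)
qed

lemma diag_map_dg: "diag_map (dg f) = f" by (simp add: diag_map_def dg_def vec_eq_iff)
lemma dg_add: "dg (f + g) = dg f + dg g" by (simp add: dg_def vec_eq_iff)
lemma cscale: "c *\<^sub>R (z::complex) = complex_of_real c * z" by (simp add: scaleR_conv_of_real)

lemma dg_scale: "dg (c *\<^sub>R f) = c *\<^sub>R dg f"
  unfolding dg_def vec_eq_iff by (simp add: cscale)
lemma dg_unit: "dg unitC = mat 1" by (simp add: dg_def vec_eq_iff unitC_def mat_def)
lemma diag_map_mat1: "diag_map (mat 1) = unitC" by (simp add: diag_map_def vec_eq_iff unitC_def mat_def)
lemma ODN_dg: "off_diag_norm (dg f) = 0"
proof -
  have "off_diag_norm (dg f) \<le> 0" by (rule ODN_le) (auto simp: dg_def)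
  then show ?thesis using ODN_nonneg[of "dg f"] by simp
qed

lemma herm_decomp: assumes "A \<in> herm"
  shows "A = (\<Sum>p\<in>UNIV. \<Sum>q\<in>UNIV. (Re (A$p$q) / 2) *\<^sub>R Hm p q + (Im (A$p$q) / 2) *\<^sub>R Km p q)"
proof -
  define a where "a p q = complex_of_real (Re (A$p$q) / 2) + \<i> * complex_of_real (Im (A$p$q) / 2)" for p q
  define b where "b p q = complex_of_real (Re (A$p$q) / 2) - \<i> * complex_of_real (Im (A$p$q) / 2)" for p q
  have "A $ r $ s = (\<Sum>p\<in>UNIV. \<Sum>q\<in>UNIV. (Re (A$p$q) / 2) *\<^sub>R Hm p q + (Im (A$p$q) / 2) *\<^sub>R Km p q) $ r $ s" for r s
  proof -
    have pt: "((Re (A$p$q) / 2) *\<^sub>R Hm p q + (Im (A$p$q) / 2) *\<^sub>R Km p q) $ r $ s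
       = (if r = p \<and> s = q then a p q else 0) + (if r = q \<and> s = p then b p q else 0)" for p q
      unfolding Hm_def Km_def a_def b_def
      by (cases "r = p"; cases "s = q"; cases "r = q"; cases "s = p") (simp_all add: complex_eq_iff)
    have "(\<Sum>p\<in>UNIV. \<Sum>q\<in>UNIV. (Re (A$p$q) / 2) *\<^sub>R Hm p q + (Im (A$p$q) / 2) *\<^sub>R Km p q) $ r $ s
      = (\<Sum>p\<in>UNIV. \<Sum>q\<in>UNIV. (if r = p \<and> s = q then a p q else 0) + (if r = q \<and> s = p then b p q else 0))"
      by (simp only: sum_component pt)
    also have "\<dots> = (\<Sum>p\<in>UNIV. \<Sum>q\<in>UNIV. (if r = p \<and> s = q then a p q else 0))
       + (\<Sum>p\<in>UNIV. \<Sum>q\<in>UNIV. (if r = q \<and> s = p then b p q else 0))"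
      by (simp only: sum.distrib)
    also have "\<dots> = a r s + b s r" by (simp only: dsum1 dsum2)
    also have "\<dots> = A $ r $ s"
      using herm_sym[OF assms, of s r] unfolding a_def b_def by (simp add: complex_eq_iff)
    finally show ?thesis by simp
  qed
  then show ?thesis unfolding vec_eq_iff by blast
qed

lemma off_decomp: assumes "A \<in> herm"
  shows "A - dg (diag_map A) = (\<Sum>p\<in>UNIV. \<Sum>q\<in>UNIV. if p = q then 0 else (1/2) *\<^sub>R Tm p q (A$p$q))"
proof -
  define a where "a p q = (if p = q then 0 else A$p$q / 2)" for p q
  define b where "b p q = (if p = q then 0 else cnj (A$p$q) / 2)" for p q
  have "(A - dg (diag_map A)) $ r $ s = (\<Sum>p\<in>UNIV. \<Sum>q\<in>UNIV. if p = q then 0 else (1/2) *\<^sub>R Tm p q (A$p$q)) $ r $ s" for r s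
  proof -
    have pt: "(if p = q then 0 else (1/2) *\<^sub>R Tm p q (A$p$q)) $ r $ s
       = (if r = p \<and> s = q then a p q else 0) + (if r = q \<and> s = p then b p q else 0)" for p q
      unfolding Tm_def a_def b_def
      by (cases "r = p"; cases "s = q"; cases "r = q"; cases "s = p"; cases "p = q") (simp_all add: cscale)
    have "(\<Sum>p\<in>UNIV. \<Sum>q\<in>UNIV. if p = q then 0 else (1/2) *\<^sub>R Tm p q (A$p$q)) $ r $ s
      = (\<Sum>p\<in>UNIV. \<Sum>q\<in>UNIV. (if r = p \<and> s = q then a p q else 0) + (if r = q \<and> s = p then b p q else 0))"
      by (simp only: sum_component pt)
    also have "\<dots> = (\<Sum>p\<in>UNIV. \<Sum>q\<in>UNIV. (if r = p \<and> s = q then a p q else 0))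
       + (\<Sum>p\<in>UNIV. \<Sum>q\<in>UNIV. (if r = q \<and> s = p then b p q else 0))"
      by (simp only: sum.distrib)
    also have "\<dots> = a r s + b s r" by (simp only: dsum1 dsum2)
    also have "\<dots> = (A - dg (diag_map A)) $ r $ s"
    proof (cases "r = s")
      case True
      have "Im (A $ r $ r) = 0" using herm_sym[OF assms, of r r] by (simp add: complex_eq_iff)
      then show ?thesis using True unfolding a_def b_def dg_def diag_map_def by (simp add: complex_eq_iff)
    next
      case False
      have "A $ s $ r = cnj (A $ r $ s)" using herm_sym[OF assms, of s r] .
      then show ?thesis using False unfolding a_def b_def dg_def diag_map_def by simp
    qed
    finally show ?thesis by simp
  qed
  then show ?thesis unfolding vec_eq_iff by blast
qed

definition qf :: "complex^'n::finite^'n \<Rightarrow> complex^'n \<Rightarrow> complex" where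
  "qf A v = (\<Sum>i\<in>UNIV. \<Sum>j\<in>UNIV. cnj (v $ i) * A $ i $ j * v $ j)"

lemma psd_qf: "psd A \<longleftrightarrow> (\<forall>v. 0 \<le> Re (qf A v))" by (simp add: psd_def qf_def)

lemma dsum3: "(\<Sum>i\<in>UNIV. \<Sum>j\<in>UNIV. if i = p \<and> j = q then f i j else 0) = (f p q :: 'a::comm_monoid_add)"
  for p q :: "'n::finite"
  using dsum1[of p q f] by (simp add: eq_commute)

lemma psd_diag: fixes A :: "complex^'n::finite^'n" assumes "psd A" shows "0 \<le> Re (A $ i $ i)"
proof -
  define v :: "complex^'n" where "v = (\<chi> k. if k = i then 1 else 0)"
  have "qf A v = (\<Sum>k\<in>UNIV. \<Sum>j\<in>UNIV. if k = i \<and> j = i then A $ k $ j else 0)"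
    unfolding qf_def v_def by (intro sum.cong refl) auto
  also have "\<dots> = A $ i $ i" by (rule dsum3)
  finally show ?thesis using assms by (metis psd_qf)
qed

lemma psd_dg: fixes f :: "real^'n::finite" assumes "posC f" shows "psd (dg f)"
  unfolding psd_qf
proof
  fix v :: "complex^'n"
  have "qf (dg f) v = (\<Sum>i\<in>UNIV. \<Sum>j\<in>UNIV. if i = j then cnj (v $ i) * complex_of_real (f $ i) * v $ i else 0)"
    unfolding qf_def dg_def by (intro sum.cong refl) auto
  also have "\<dots> = (\<Sum>i\<in>UNIV. cnj (v $ i) * complex_of_real (f $ i) * v $ i)"
    by (simp add: sum.delta)
  finally have "Re (qf (dg f) v) = (\<Sum>i\<in>UNIV. f $ i * ((Re (v $ i))\<^sup>2 + (Im (v $ i))\<^sup>2))"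
    by (simp add: power2_eq_square algebra_simps)
  also have "\<dots> \<ge> 0" using assms unfolding posC_def by (intro sum_nonneg mult_nonneg_nonneg) auto
  finally show "0 \<le> Re (qf (dg f) v)" .
qed

lemma psd_Tm: fixes p q :: "'n::finite" assumes pq: "p \<noteq> q" shows "psd (cmod a *\<^sub>R mat 1 + Tm p q a)"
  unfolding psd_qf
proof
  fix v :: "complex^'n"
  let ?c = "cmod a"
  have split: "qf (?c *\<^sub>R mat 1 + Tm p q a) v =
      (\<Sum>i\<in>UNIV. \<Sum>j\<in>UNIV. if i = j then complex_of_real ?c * (cnj (v $ i) * v $ i) else 0)
    + ((\<Sum>i\<in>UNIV. \<Sum>j\<in>UNIV. if i = p \<and> j = q then cnj (v $ i) * a * v $ j else 0)
    + (\<Sum>i\<in>UNIV. \<Sum>j\<in>UNIV. if i = q \<and> j = p then cnj (v $ i) * cnj a * v $ j else 0))"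
    unfolding qf_def sum.distrib[symmetric]
    by (intro sum.cong refl) (auto simp: Tm_def mat_def cscale algebra_simps)
  have s1: "(\<Sum>i\<in>UNIV. \<Sum>j\<in>UNIV. if i = j then complex_of_real ?c * (cnj (v $ i) * v $ i) else 0)
     = (\<Sum>i\<in>UNIV. complex_of_real ?c * (cnj (v $ i) * v $ i))"
    by (simp add: sum.delta)
  have "qf (?c *\<^sub>R mat 1 + Tm p q a) v = (\<Sum>i\<in>UNIV. complex_of_real ?c * (cnj (v $ i) * v $ i))
     + (cnj (v $ p) * a * v $ q + cnj (v $ q) * cnj a * v $ p)"
    unfolding split s1 dsum3 ..
  moreover have "cnj (v $ q) * cnj a * v $ p = cnj (cnj (v $ p) * a * v $ q)" by simp
  moreover have "Re (complex_of_real ?c * (cnj (v $ i) * v $ i)) = ?c * (cmod (v $ i))\<^sup>2" for i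
    unfolding cmod_power2 by (simp add: power2_eq_square)
  ultimately have R: "Re (qf (?c *\<^sub>R mat 1 + Tm p q a) v) = ?c * (\<Sum>i\<in>UNIV. (cmod (v $ i))\<^sup>2)
     + 2 * Re (cnj (v $ p) * a * v $ q)"
    by (simp only: Re_sum plus_complex.sel complex_cnj_cnj sum_distrib_left cnj.sel)
  have "(\<Sum>i\<in>{p,q}. (cmod (v $ i))\<^sup>2) \<le> (\<Sum>i\<in>UNIV. (cmod (v $ i))\<^sup>2)"
    by (intro sum_mono2) auto
  then have S: "(cmod (v $ p))\<^sup>2 + (cmod (v $ q))\<^sup>2 \<le> (\<Sum>i\<in>UNIV. (cmod (v $ i))\<^sup>2)"
    using pq by simp
  have "- Re (cnj (v $ p) * a * v $ q) \<le> cmod (cnj (v $ p) * a * v $ q)"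
    using abs_Re_le_cmod[of "cnj (v $ p) * a * v $ q"] by linarith
  also have "\<dots> = cmod (v $ p) * ?c * cmod (v $ q)" by (simp add: norm_mult)
  finally have T: "- Re (cnj (v $ p) * a * v $ q) \<le> cmod (v $ p) * ?c * cmod (v $ q)" .
  have c0: "0 \<le> ?c" by simp
  have "0 \<le> ?c * (cmod (v $ p) - cmod (v $ q))\<^sup>2" using c0 by simp
  also have "\<dots> = ?c * ((cmod (v $ p))\<^sup>2 + (cmod (v $ q))\<^sup>2) - 2 * (cmod (v $ p) * ?c * cmod (v $ q))"
    by (simp add: power2_eq_square algebra_simps)
  also have "\<dots> \<le> ?c * (\<Sum>i\<in>UNIV. (cmod (v $ i))\<^sup>2) + 2 * Re (cnj (v $ p) * a * v $ q)"
    using mult_left_mono[OF S c0] T by linarith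
  finally show "0 \<le> Re (qf (?c *\<^sub>R mat 1 + Tm p q a) v)" using R by simp
qed

lemma Tm_neg: "Tm p q (- a) = - Tm p q a"
proof -
  have "Tm p q (-a) $ i $ j = (- Tm p q a) $ i $ j" for i j
    unfolding Tm_def by (cases "i = p"; cases "j = q"; cases "i = q"; cases "j = p") simp_all
  then show ?thesis unfolding vec_eq_iff by blast
qed

lemma state_herm_lin: "is_state herm psd (mat 1) \<nu> \<Longrightarrow> lin_on herm \<nu>"
  by (rule state_lin)

lemma state_Tm: assumes st: "is_state herm psd (mat 1) \<nu>" and pq: "p \<noteq> q"
  shows "\<bar>\<nu> (Tm p q a)\<bar> \<le> cmod a"
proof -
  have lin: "lin_on herm \<nu>" using st by (rule state_lin)
  have one: "\<nu> (mat 1) = 1" using st by (simp add: is_state_def)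
  have pos: "0 \<le> \<nu> X" if "X \<in> herm" "psd X" for X using st that by (simp add: is_state_def)
  have ad: "\<nu> (cmod b *\<^sub>R mat 1 + Tm p q b) = cmod b + \<nu> (Tm p q b)" for b
  proof -
    have m: "cmod b *\<^sub>R mat 1 \<in> herm" using sub_herm herm_mat1 unfolding sub_def by blast
    have "\<nu> (cmod b *\<^sub>R mat 1 + Tm p q b) = \<nu> (cmod b *\<^sub>R mat 1) + \<nu> (Tm p q b)"
      using lin m Tm_herm unfolding lin_on_def by blast
    also have "\<nu> (cmod b *\<^sub>R mat 1) = cmod b * \<nu> (mat 1)" using lin herm_mat1 unfolding lin_on_def by blast
    also have "\<dots> = cmod b" using one by simp
    finally show ?thesis .
  qed
  have inh: "cmod b *\<^sub>R mat 1 + Tm p q b \<in> herm" for b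
    using sub_herm herm_mat1 Tm_herm unfolding sub_def by blast
  have g1: "0 \<le> cmod a + \<nu> (Tm p q a)" using pos[OF inh psd_Tm[OF pq]] ad by simp
  have "\<nu> (Tm p q (-a)) = \<nu> ((-1) *\<^sub>R Tm p q a)" by (simp add: Tm_neg)
  also have "\<dots> = (-1) * \<nu> (Tm p q a)" using lin Tm_herm unfolding lin_on_def by blast
  also have "\<dots> = - \<nu> (Tm p q a)" by simp
  finally have "0 \<le> cmod a - \<nu> (Tm p q a)" using pos[OF inh psd_Tm[OF pq, of "-a"]] ad[of "-a"] by simp
  then show ?thesis using g1 by linarith
qed

lemma count_sum: "(\<Sum>p\<in>(UNIV::'n::finite set). \<Sum>q\<in>UNIV. if p = q then 0 else k) = real CARD('n) * (real CARD('n) - 1) * k"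
proof -
  have h: "(\<Sum>q\<in>(UNIV::'n set). if p = q then 0 else k) = real CARD('n) * k - k" for p
  proof -
    have "(\<Sum>q\<in>(UNIV::'n set). if p = q then 0 else k) = (\<Sum>q\<in>(UNIV::'n set). k - (if p = q then k else 0))"
      by (intro sum.cong) auto
    also have "\<dots> = real CARD('n) * k - k" by (simp add: sum_subtractf sum.delta)
    finally show ?thesis .
  qed
  have "(\<Sum>p\<in>(UNIV::'n set). \<Sum>q\<in>UNIV. if p = q then 0 else k) = (\<Sum>p\<in>(UNIV::'n set). real CARD('n) * k - k)"
    by (simp only: h)
  also have "\<dots> = real CARD('n) * (real CARD('n) * k - k)" by simp
  finally show ?thesis by (simp add: algebra_simps)
qed

lemma state_off: fixes A :: "complex^'n::finite^'n" assumes st: "is_state herm psd (mat 1) \<nu>" and A: "A \<in> herm"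
  and c: "\<And>p q. p \<noteq> q \<Longrightarrow> cmod (A $ p $ q) \<le> c"
  shows "\<bar>\<nu> (A - dg (diag_map A))\<bar> \<le> real CARD('n) * (real CARD('n) - 1) * (c / 2)"
proof -
  have lin: "lin_on herm \<nu>" using st by (rule state_lin)
  define M where "M p q = (if p = q then 0 else (1/2) *\<^sub>R Tm p q (A$p$q))" for p q
  have Mh: "M p q \<in> herm" for p q
  proof (cases "p = q")
    case True
    have "0 \<in> herm" using sub_herm unfolding sub_def by blast
    with True show ?thesis unfolding M_def by simp
  next
    case False
    have "(1/2) *\<^sub>R Tm p q (A$p$q) \<in> herm" using sub_herm Tm_herm unfolding sub_def by blast
    with False show ?thesis unfolding M_def by simp
  qed
  have Mh2: "(\<Sum>q\<in>UNIV. M p q) \<in> herm" for p by (rule sub_sum[OF sub_herm]) (simp add: Mh)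
  have "\<nu> (A - dg (diag_map A)) = \<nu> (\<Sum>p\<in>UNIV. \<Sum>q\<in>UNIV. M p q)" using off_decomp[OF A] unfolding M_def by simp
  also have "\<dots> = (\<Sum>p\<in>UNIV. \<nu> (\<Sum>q\<in>UNIV. M p q))" by (rule lin_on_sum[OF sub_herm lin]) (simp_all add: Mh2)
  also have "\<dots> = (\<Sum>p\<in>UNIV. \<Sum>q\<in>UNIV. \<nu> (M p q))"
    by (intro sum.cong refl lin_on_sum[OF sub_herm lin]) (simp_all add: Mh)
  finally have e: "\<nu> (A - dg (diag_map A)) = (\<Sum>p\<in>UNIV. \<Sum>q\<in>UNIV. \<nu> (M p q))" .
  have b: "\<bar>\<nu> (M p q)\<bar> \<le> (if p = q then 0 else c / 2)" for p q
  proof (cases "p = q")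
    case True
    have "\<nu> 0 = \<nu> ((0::real) *\<^sub>R 0)" by simp
    also have "\<dots> = 0" using lin sub_herm unfolding lin_on_def sub_def by (metis mult_zero_left)
    finally show ?thesis using True by (simp add: M_def)
  next
    case False
    have "\<nu> ((1/2) *\<^sub>R Tm p q (A$p$q)) = (1/2) * \<nu> (Tm p q (A$p$q))" using lin Tm_herm unfolding lin_on_def by blast
    then have "\<nu> (M p q) = (1/2) * \<nu> (Tm p q (A$p$q))" using False unfolding M_def by simp
    then have "\<bar>\<nu> (M p q)\<bar> = \<bar>\<nu> (Tm p q (A$p$q))\<bar> / 2" by simp
    also have "\<dots> \<le> cmod (A$p$q) / 2" using state_Tm[OF st False] by simp
    also have "\<dots> \<le> c / 2" using c[OF False] by simp
    finally show ?thesis using False by simp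
  qed
  have "\<bar>\<Sum>p\<in>UNIV. \<Sum>q\<in>UNIV. \<nu> (M p q)\<bar> \<le> (\<Sum>p\<in>UNIV. \<Sum>q\<in>UNIV. \<bar>\<nu> (M p q)\<bar>)"
    by (rule order_trans[OF sum_abs]) (intro sum_mono sum_abs)
  also have "\<dots> \<le> (\<Sum>p\<in>(UNIV::'n set). \<Sum>q\<in>UNIV. if p = q then 0 else c / 2)"
    by (intro sum_mono) (rule b)
  also have "\<dots> = real CARD('n) * (real CARD('n) - 1) * (c / 2)" by (rule count_sum)
  finally show ?thesis using e by simp
qed

definition eR :: "'n::finite \<Rightarrow> real^'n" where
  "eR i = (\<chi> k. if k = i then 1 else 0)"

lemma lin_add: "lin_on V \<xi> \<Longrightarrow> x \<in> V \<Longrightarrow> y \<in> V \<Longrightarrow> \<xi> (x + y) = \<xi> x + \<xi> y"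
  unfolding lin_on_def by blast
lemma lin_scale: "lin_on V \<xi> \<Longrightarrow> x \<in> V \<Longrightarrow> \<xi> (c *\<^sub>R x) = c * \<xi> x"
  unfolding lin_on_def by blast

lemma stateC: "is_state UNIV posC unitC \<mu> \<Longrightarrow> lin_on UNIV \<mu> \<and> \<mu> unitC = 1 \<and> (\<forall>g. posC g \<longrightarrow> 0 \<le> \<mu> g)"
  unfolding is_state_def lin_on_def by auto

lemma stateC_bound: assumes st: "is_state UNIV posC unitC \<mu>" shows "\<bar>\<mu> g\<bar> \<le> norm g"
proof -
  have lin: "lin_on UNIV \<mu>" and one: "\<mu> unitC = 1" and pos: "\<And>g. posC g \<Longrightarrow> 0 \<le> \<mu> g"
    using stateC[OF st] by auto
  let ?m = "norm g"
  have sc: "\<mu> (?m *\<^sub>R unitC) = ?m" using lin one unfolding lin_on_def by simp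
  have cn: "\<bar>g $ i\<bar> \<le> ?m" for i by (rule component_le_norm_cart)
  have "posC (?m *\<^sub>R unitC - g)" unfolding posC_def unitC_def
  proof
    fix i show "0 \<le> (?m *\<^sub>R (\<chi> i. 1) - g) $ i" using cn[of i] by simp
  qed
  then have "0 \<le> \<mu> (?m *\<^sub>R unitC - g)" by (rule pos)
  also have "\<mu> (?m *\<^sub>R unitC - g) = ?m - \<mu> g" using lin_on_diff[OF lin _ _ sub_UNIV] sc by simp
  finally have a: "\<mu> g \<le> ?m" by simp
  have "posC (?m *\<^sub>R unitC + g)" unfolding posC_def unitC_def
  proof
    fix i show "0 \<le> (?m *\<^sub>R (\<chi> i. 1) + g) $ i" using cn[of i] by simp
  qed
  then have "0 \<le> \<mu> (?m *\<^sub>R unitC + g)" by (rule pos)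
  also have "\<mu> (?m *\<^sub>R unitC + g) = ?m + \<mu> g" using lin sc unfolding lin_on_def by simp
  finally have b: "- \<mu> g \<le> ?m" by simp
  show ?thesis using a b by simp
qed

lemma nu_of_mu: fixes \<mu> :: "real^'n::finite \<Rightarrow> real" assumes st: "is_state UNIV posC unitC \<mu>"
  shows "is_state herm psd (mat 1) (\<lambda>A. if A \<in> herm then \<mu> (diag_map A) else 0)"
proof -
  have lin: "lin_on UNIV \<mu>" and one: "\<mu> unitC = 1" and pos: "\<And>g. posC g \<Longrightarrow> 0 \<le> \<mu> g"
    using stateC[OF st] by auto
  have ad: "x + y \<in> herm" "c *\<^sub>R x \<in> herm" if "x \<in> herm" "y \<in> herm" for x y c
    using sub_herm that unfolding sub_def by blast+
  show ?thesis unfolding is_state_def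
  proof (intro conjI ballI allI impI)
    fix x y :: "complex^'n^'n" assume h: "x \<in> herm" "y \<in> herm"
    have "x + y \<in> herm" using ad(1)[OF h] .
    then show "(if x + y \<in> herm then \<mu> (diag_map (x + y)) else 0) =
      (if x \<in> herm then \<mu> (diag_map x) else 0) + (if y \<in> herm then \<mu> (diag_map y) else 0)"
      using h lin_add[OF lin, of "diag_map x" "diag_map y"] by (simp add: diag_map_add)
  next
    fix c and x :: "complex^'n^'n" assume "x \<in> herm"
    then show "(if c *\<^sub>R x \<in> herm then \<mu> (diag_map (c *\<^sub>R x)) else 0) = c * (if x \<in> herm then \<mu> (diag_map x) else 0)"
      using ad(2)[of x x c] lin_scale[OF lin, of "diag_map x" c] by (simp add: diag_map_scale)
  next
    fix x :: "complex^'n^'n" assume "x \<in> herm" "psd x"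
    then show "0 \<le> (if x \<in> herm then \<mu> (diag_map x) else 0)"
    proof -
      have "posC (diag_map x)" unfolding posC_def diag_map_def using psd_diag[OF \<open>psd x\<close>] by simp
      then show ?thesis using pos \<open>x \<in> herm\<close> by simp
    qed
  next
    show "(if mat 1 \<in> herm then \<mu> (diag_map (mat 1)) else 0) = 1"
      by (simp add: herm_mat1 one diag_map_mat1)
  next
    fix x :: "complex^'n^'n" assume "x \<notin> herm"
    then show "(if x \<in> herm then \<mu> (diag_map x) else 0) = 0" by simp
  qed
qed

lemma mu_of_nu: fixes \<nu> :: "complex^'n::finite^'n \<Rightarrow> real" assumes st: "is_state herm psd (mat 1) \<nu>"
  shows "is_state UNIV posC unitC (\<lambda>f. \<nu> (dg f))"
proof -
  have lin: "lin_on herm \<nu>" using st by (rule state_lin)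
  show ?thesis unfolding is_state_def
  proof (intro conjI ballI allI impI)
    fix x y :: "real^'n"
    show "\<nu> (dg (x + y)) = \<nu> (dg x) + \<nu> (dg y)" using lin_add[OF lin dg_herm dg_herm] by (simp add: dg_add)
  next
    fix c and x :: "real^'n"
    show "\<nu> (dg (c *\<^sub>R x)) = c * \<nu> (dg x)" using lin_scale[OF lin dg_herm] by (simp add: dg_scale)
  next
    fix x :: "real^'n" assume "posC x"
    then show "0 \<le> \<nu> (dg x)" using st dg_herm psd_dg unfolding is_state_def by blast
  next
    show "\<nu> (dg unitC) = 1" using st unfolding dg_unit is_state_def by blast
  qed simp
qed

lemma vec_decomp: "g = (\<Sum>i\<in>UNIV. (g $ i) *\<^sub>R eR i)"
  by (simp add: vec_eq_iff eR_def if_distrib[of "\<lambda>x. _ * x"] sum.delta cong: if_cong)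

lemma compC: assumes l1: "lin_on UNIV \<phi>" and l2: "lin_on UNIV \<psi>" and b: "\<And>i. \<bar>g $ i\<bar> \<le> C"
  shows "\<bar>\<phi> g - \<psi> g\<bar> \<le> C * (\<Sum>i\<in>UNIV. \<bar>\<phi> (eR i) - \<psi> (eR i)\<bar>)"
proof -
  have e: "\<xi> g = (\<Sum>i\<in>UNIV. g $ i * \<xi> (eR i))" if "lin_on UNIV \<xi>" for \<xi>
  proof -
    have "\<xi> g = \<xi> (\<Sum>i\<in>UNIV. (g $ i) *\<^sub>R eR i)" using vec_decomp[of g] by simp
    also have "\<dots> = (\<Sum>i\<in>UNIV. \<xi> ((g $ i) *\<^sub>R eR i))" by (rule lin_on_sum[OF sub_UNIV that]) auto
    also have "\<dots> = (\<Sum>i\<in>UNIV. g $ i * \<xi> (eR i))" using that unfolding lin_on_def by simp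
    finally show ?thesis .
  qed
  have "\<phi> g - \<psi> g = (\<Sum>i\<in>UNIV. g $ i * (\<phi> (eR i) - \<psi> (eR i)))"
    unfolding e[OF l1] e[OF l2] by (simp add: sum_subtractf right_diff_distrib)
  also have "\<bar>\<dots>\<bar> \<le> (\<Sum>i\<in>UNIV. \<bar>g $ i\<bar> * \<bar>\<phi> (eR i) - \<psi> (eR i)\<bar>)"
    by (rule order_trans[OF sum_abs]) (simp add: abs_mult)
  also have "\<dots> \<le> (\<Sum>i\<in>UNIV. C * \<bar>\<phi> (eR i) - \<psi> (eR i)\<bar>)"
    by (intro sum_mono mult_right_mono b) simp
  finally show ?thesis by (simp add: sum_distrib_left)
qed

lemma compM: assumes l1: "lin_on herm \<phi>" and l2: "lin_on herm \<psi>" and B: "B \<in> herm"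
  and b: "\<And>p q. cmod (B $ p $ q) \<le> C"
  shows "\<bar>\<phi> B - \<psi> B\<bar> \<le> C * (\<Sum>p\<in>UNIV. \<Sum>q\<in>UNIV. \<bar>\<phi> (Hm p q) - \<psi> (Hm p q)\<bar> + \<bar>\<phi> (Km p q) - \<psi> (Km p q)\<bar>)"
proof -
  have inh: "x *\<^sub>R Hm p q + y *\<^sub>R Km p q \<in> herm" for x y p q
    using sub_herm Hm_herm Km_herm unfolding sub_def by blast
  have e: "\<xi> B = (\<Sum>p\<in>UNIV. \<Sum>q\<in>UNIV. (Re (B$p$q) / 2) * \<xi> (Hm p q) + (Im (B$p$q) / 2) * \<xi> (Km p q))"
    if "lin_on herm \<xi>" for \<xi>
  proof -
    have s2: "(\<Sum>q\<in>UNIV. (Re (B$p$q) / 2) *\<^sub>R Hm p q + (Im (B$p$q) / 2) *\<^sub>R Km p q) \<in> herm" for p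
      by (rule sub_sum[OF sub_herm]) (simp add: inh)
    have "\<xi> B = \<xi> (\<Sum>p\<in>UNIV. \<Sum>q\<in>UNIV. (Re (B$p$q) / 2) *\<^sub>R Hm p q + (Im (B$p$q) / 2) *\<^sub>R Km p q)"
      using herm_decomp[OF B] by simp
    also have "\<dots> = (\<Sum>p\<in>UNIV. \<xi> (\<Sum>q\<in>UNIV. (Re (B$p$q) / 2) *\<^sub>R Hm p q + (Im (B$p$q) / 2) *\<^sub>R Km p q))"
      by (rule lin_on_sum[OF sub_herm that]) (simp_all add: s2)
    also have "\<dots> = (\<Sum>p\<in>UNIV. \<Sum>q\<in>UNIV. \<xi> ((Re (B$p$q) / 2) *\<^sub>R Hm p q + (Im (B$p$q) / 2) *\<^sub>R Km p q))"
      by (intro sum.cong refl lin_on_sum[OF sub_herm that]) (simp_all add: inh)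
    also have "\<dots> = (\<Sum>p\<in>UNIV. \<Sum>q\<in>UNIV. (Re (B$p$q) / 2) * \<xi> (Hm p q) + (Im (B$p$q) / 2) * \<xi> (Km p q))"
    proof (intro sum.cong refl)
      fix p q
      have h1: "(Re (B$p$q) / 2) *\<^sub>R Hm p q \<in> herm" "(Im (B$p$q) / 2) *\<^sub>R Km p q \<in> herm"
        using sub_herm Hm_herm Km_herm unfolding sub_def by blast+
      show "\<xi> ((Re (B$p$q) / 2) *\<^sub>R Hm p q + (Im (B$p$q) / 2) *\<^sub>R Km p q) = (Re (B$p$q) / 2) * \<xi> (Hm p q) + (Im (B$p$q) / 2) * \<xi> (Km p q)"
        using lin_add[OF that h1] lin_scale[OF that Hm_herm] lin_scale[OF that Km_herm] by simp
    qed
    finally show ?thesis .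
  qed
  have C0: "0 \<le> C" using b[of undefined undefined] norm_ge_zero order_trans by blast
  have "\<phi> B - \<psi> B = (\<Sum>p\<in>UNIV. \<Sum>q\<in>UNIV. (Re (B$p$q) / 2) * (\<phi> (Hm p q) - \<psi> (Hm p q)) + (Im (B$p$q) / 2) * (\<phi> (Km p q) - \<psi> (Km p q)))"
  proof -
    have "\<phi> B - \<psi> B = (\<Sum>p\<in>UNIV. \<Sum>q\<in>UNIV. (Re (B$p$q) / 2) * \<phi> (Hm p q) + (Im (B$p$q) / 2) * \<phi> (Km p q))
       - (\<Sum>p\<in>UNIV. \<Sum>q\<in>UNIV. (Re (B$p$q) / 2) * \<psi> (Hm p q) + (Im (B$p$q) / 2) * \<psi> (Km p q))"
      by (simp only: e[OF l1] e[OF l2])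
    also have "\<dots> = (\<Sum>p\<in>UNIV. \<Sum>q\<in>UNIV. ((Re (B$p$q) / 2) * \<phi> (Hm p q) + (Im (B$p$q) / 2) * \<phi> (Km p q))
       - ((Re (B$p$q) / 2) * \<psi> (Hm p q) + (Im (B$p$q) / 2) * \<psi> (Km p q)))"
      by (simp only: sum_subtractf)
    also have "\<dots> = (\<Sum>p\<in>UNIV. \<Sum>q\<in>UNIV. (Re (B$p$q) / 2) * (\<phi> (Hm p q) - \<psi> (Hm p q)) + (Im (B$p$q) / 2) * (\<phi> (Km p q) - \<psi> (Km p q)))"
      by (intro sum.cong refl) (simp add: right_diff_distrib)
    finally show ?thesis .
  qed
  also have "\<bar>\<dots>\<bar> \<le> (\<Sum>p\<in>UNIV. \<Sum>q\<in>UNIV. \<bar>(Re (B$p$q) / 2) * (\<phi> (Hm p q) - \<psi> (Hm p q)) + (Im (B$p$q) / 2) * (\<phi> (Km p q) - \<psi> (Km p q))\<bar>)"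
    by (rule order_trans[OF sum_abs]) (intro sum_mono sum_abs)
  also have "\<dots> \<le> (\<Sum>p\<in>UNIV. \<Sum>q\<in>UNIV. C * (\<bar>\<phi> (Hm p q) - \<psi> (Hm p q)\<bar> + \<bar>\<phi> (Km p q) - \<psi> (Km p q)\<bar>))"
  proof (intro sum_mono)
    fix p q
    have r: "\<bar>Re (B$p$q) / 2\<bar> \<le> C" using abs_Re_le_cmod[of "B$p$q"] b[of p q] C0 by simp
    have i: "\<bar>Im (B$p$q) / 2\<bar> \<le> C" using abs_Im_le_cmod[of "B$p$q"] b[of p q] C0 by simp
    have "\<bar>(Re (B$p$q) / 2) * (\<phi> (Hm p q) - \<psi> (Hm p q)) + (Im (B$p$q) / 2) * (\<phi> (Km p q) - \<psi> (Km p q))\<bar>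
      \<le> \<bar>Re (B$p$q) / 2\<bar> * \<bar>\<phi> (Hm p q) - \<psi> (Hm p q)\<bar> + \<bar>Im (B$p$q) / 2\<bar> * \<bar>\<phi> (Km p q) - \<psi> (Km p q)\<bar>"
      by (metis abs_mult abs_triangle_ineq)
    also have "\<dots> \<le> C * \<bar>\<phi> (Hm p q) - \<psi> (Hm p q)\<bar> + C * \<bar>\<phi> (Km p q) - \<psi> (Km p q)\<bar>"
      by (intro add_mono mult_right_mono r i) simp_all
    finally show "\<bar>(Re (B$p$q) / 2) * (\<phi> (Hm p q) - \<psi> (Hm p q)) + (Im (B$p$q) / 2) * (\<phi> (Km p q) - \<psi> (Km p q))\<bar>
      \<le> C * (\<bar>\<phi> (Hm p q) - \<psi> (Hm p q)\<bar> + \<bar>\<phi> (Km p q) - \<psi> (Km p q)\<bar>)" by (simp add: distrib_left)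
  qed
  finally show ?thesis by (simp add: sum_distrib_left)
qed

lemma sum_le_set: assumes "finite F" "\<And>i. i \<in> I \<Longrightarrow> b i \<in> F" "\<And>x. x \<in> F \<Longrightarrow> 0 \<le> (g x :: real)"
  shows "(\<Sum>i\<in>I. g (b i)) \<le> real (card I) * (\<Sum>x\<in>F. g x)"
proof -
  have "g (b i) \<le> (\<Sum>x\<in>F. g x)" if "i \<in> I" for i
    using assms that by (intro member_le_sum) auto
  then show ?thesis using sum_bounded_above[of I "\<lambda>i. g (b i)"] by simp
qed

lemma dsum_le_set: assumes "finite F" "\<And>p q. b p q \<in> F" "\<And>x. x \<in> F \<Longrightarrow> 0 \<le> (g x :: real)"
  shows "(\<Sum>p\<in>(UNIV::'n::finite set). \<Sum>q\<in>(UNIV::'n set). g (b p q)) \<le> real CARD('n) * real CARD('n) * (\<Sum>x\<in>F. g x)"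
proof -
  have "(\<Sum>q\<in>(UNIV::'n set). g (b p q)) \<le> real CARD('n) * (\<Sum>x\<in>F. g x)" for p
    using sum_le_set[of F UNIV "b p" g] assms by simp
  then have "(\<Sum>p\<in>(UNIV::'n set). \<Sum>q\<in>(UNIV::'n set). g (b p q)) \<le> (\<Sum>p\<in>(UNIV::'n set). real CARD('n) * (\<Sum>x\<in>F. g x))"
    by (intro sum_mono) simp
  then show ?thesis by simp
qed

lemma card_two: fixes p q :: "'n::finite" shows "p \<noteq> q \<Longrightarrow> 2 \<le> CARD('n)"
proof -
  assume "p \<noteq> q"
  then have "card {p, q} = 2" by simp
  moreover have "card {p, q} \<le> CARD('n)" by (rule card_mono) auto
  ultimately show ?thesis by simp
qed

locale LE = metr d for d :: "'n::finite \<Rightarrow> 'n \<Rightarrow> real" +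
  fixes \<epsilon> :: real
  assumes epos: "\<epsilon> > 0"
begin

definition kc :: real where "kc = (real (CARD('n))^2 - real (CARD('n))) / (2 * \<epsilon>)"
definition cc :: real where "cc = 2 * \<epsilon> / (real (CARD('n))^2 - real (CARD('n)))"
definition x0 :: 'n where "x0 = undefined"
definition D :: real where "D = (\<Sum>i\<in>UNIV. d i x0)"

lemma Leps_eq: "L_eps d \<epsilon> A = max (lipschitz_seminorm d (diag_map A)) (kc * off_diag_norm A)"
  unfolding L_eps_def kc_def by simp

lemma nn_nonneg: "0 \<le> real (CARD('n))^2 - real (CARD('n))"
proof -
  have "1 \<le> real CARD('n)" by (simp add: Suc_leI)
  then have "real CARD('n) * 1 \<le> real CARD('n) * real CARD('n)" by (intro mult_left_mono) auto
  then show ?thesis by (simp add: power2_eq_square)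
qed

lemma nn_pos: "p \<noteq> q \<Longrightarrow> 0 < real (CARD('n))^2 - real (CARD('n))" for p q :: 'n
proof -
  assume "p \<noteq> q"
  then have "2 \<le> real CARD('n)" using card_two[of p q] by simp
  then have "real CARD('n) * 1 < real CARD('n) * real CARD('n)" by (intro mult_strict_left_mono) auto
  then show ?thesis by (simp add: power2_eq_square)
qed

lemma kc_nonneg: "0 \<le> kc" unfolding kc_def using nn_nonneg epos by simp
lemma cc_nonneg: "0 \<le> cc" unfolding cc_def using nn_nonneg epos by simp

lemma D_ge: "d i x0 \<le> D" unfolding D_def by (rule member_le_sum) (auto simp: dnn)
lemma D_nonneg: "0 \<le> D" unfolding D_def by (rule sum_nonneg) (auto simp: dnn)

lemma Leps_sn: "is_seminorm_on V (L_eps d \<epsilon>)"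
proof -
  have "is_seminorm_on V (\<lambda>A. max (lipschitz_seminorm d (diag_map A)) (kc * off_diag_norm A))"
    by (intro sn_max sn_comp[OF LS_seminorm] sn_scale[OF ODN_seminorm] kc_nonneg diag_map_add diag_map_scale)
  moreover have "L_eps d \<epsilon> = (\<lambda>A. max (lipschitz_seminorm d (diag_map A)) (kc * off_diag_norm A))"
    using Leps_eq by (intro ext) simp
  ultimately show ?thesis by simp
qed

lemma Leps_ge_LS: "lipschitz_seminorm d (diag_map A) \<le> L_eps d \<epsilon> A" unfolding Leps_eq by simp
lemma Leps_nonneg: "0 \<le> L_eps d \<epsilon> A" using Leps_ge_LS[of A] LS_nonneg[of d "diag_map A"] by linarith

lemma Leps_off: assumes "L_eps d \<epsilon> A \<le> 1" "p \<noteq> q" shows "cmod (A $ p $ q) \<le> cc"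
proof -
  have kp: "0 < kc" unfolding kc_def using nn_pos[OF assms(2)] epos by simp
  have "kc * cmod (A $ p $ q) \<le> kc * off_diag_norm A" using ODN_ge[OF assms(2)] kp by simp
  also have "\<dots> \<le> 1" using assms(1) unfolding Leps_eq by simp
  finally have "cmod (A $ p $ q) \<le> 1 / kc" using kp by (simp add: field_simps)
  also have "1 / kc = cc" unfolding kc_def cc_def by simp
  finally show ?thesis .
qed

lemma Leps_state_off: assumes st: "is_state herm psd (mat 1) \<nu>" and A: "A \<in> herm" and L: "L_eps d \<epsilon> A \<le> 1"
  shows "\<bar>\<nu> (A - dg (diag_map A))\<bar> \<le> \<epsilon>"
proof -
  have "\<bar>\<nu> (A - dg (diag_map A))\<bar> \<le> real CARD('n) * (real CARD('n) - 1) * (cc / 2)"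
    by (rule state_off[OF st A Leps_off[OF L]])
  also have "\<dots> = (real (CARD('n))^2 - real (CARD('n))) * (\<epsilon> / (real (CARD('n))^2 - real (CARD('n))))"
  proof -
    have g: "(2 * \<epsilon> / y) / 2 = \<epsilon> / y" for y :: real by (cases "y = 0") (simp_all add: field_simps)
    have "cc / 2 = \<epsilon> / (real (CARD('n))^2 - real (CARD('n)))" unfolding cc_def by (rule g)
    moreover have "real CARD('n) * (real CARD('n) - 1) = real (CARD('n))^2 - real (CARD('n))"
      by (simp add: power2_eq_square algebra_simps)
    ultimately show ?thesis by (simp only:)
  qed
  also have "\<dots> \<le> \<epsilon>"
  proof (cases "real (CARD('n))^2 - real (CARD('n)) = 0")
    case True then show ?thesis using epos by simp
  next
    case False then show ?thesis by simp
  qed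
  finally show ?thesis .
qed

lemma ODN_mat1: "off_diag_norm (t *\<^sub>R mat 1 :: complex^'n^'n) = 0"
proof -
  have "off_diag_norm (t *\<^sub>R mat 1 :: complex^'n^'n) \<le> 0" by (rule ODN_le) (auto simp: mat_def)
  then show ?thesis using ODN_nonneg[of "t *\<^sub>R mat 1 :: complex^'n^'n"] by simp
qed

lemma diag_map_tmat: "diag_map (t *\<^sub>R mat 1 :: complex^'n^'n) = t *\<^sub>R unitC"
  by (simp add: diag_map_scale diag_map_mat1)

lemma Leps_tmat: "L_eps d \<epsilon> (t *\<^sub>R mat 1) = 0"
  unfolding Leps_eq diag_map_tmat ODN_mat1 LS_const by simp

lemma Leps_ker: assumes A: "A \<in> herm" shows "L_eps d \<epsilon> A = 0 \<longleftrightarrow> (\<exists>t. A = t *\<^sub>R mat 1)"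
proof
  assume z: "L_eps d \<epsilon> A = 0"
  have ls: "lipschitz_seminorm d (diag_map A) = 0"
    using Leps_ge_LS[of A] LS_nonneg[of d "diag_map A"] z by linarith
  define t where "t = Re (A $ x0 $ x0)"
  have "A $ i $ j = (t *\<^sub>R mat 1 :: complex^'n^'n) $ i $ j" for i j
  proof (cases "i = j")
    case True
    have "Im (A $ i $ i) = 0" using herm_sym[OF A, of i i] by (simp add: complex_eq_iff)
    moreover have "Re (A $ i $ i) = t" using LS_zero[OF ls, of i x0] unfolding t_def diag_map_def by simp
    ultimately show ?thesis using True by (simp add: mat_def complex_eq_iff)
  next
    case False
    have kp: "0 < kc" unfolding kc_def using nn_pos[OF False] epos by simp
    have "kc * off_diag_norm A \<le> 0" using z unfolding Leps_eq by simp
    then have "off_diag_norm A \<le> 0" using kp by (simp add: mult_le_0_iff)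
    then have "cmod (A $ i $ j) \<le> 0" using ODN_ge[OF False, of A] by linarith
    then show ?thesis using False by (simp add: mat_def)
  qed
  then show "\<exists>t. A = t *\<^sub>R mat 1" unfolding vec_eq_iff by blast
next
  assume "\<exists>t. A = t *\<^sub>R mat 1"
  then show "L_eps d \<epsilon> A = 0" using Leps_tmat by auto
qed

lemma lipnorm_Leps: "is_lip_norm herm psd (mat 1) (L_eps d \<epsilon>)"
proof -
  define FM where "FM = (\<lambda>(p,q). Hm p q) ` (UNIV :: ('n \<times> 'n) set) \<union> (\<lambda>(p,q). Km p q) ` UNIV"
  have fFM: "finite FM" unfolding FM_def by simp
  have HF: "Hm p q \<in> FM" "Km p q \<in> FM" for p q unfolding FM_def by (auto intro: image_eqI[of _ _ "(p,q)"])
  have FMh: "FM \<subseteq> herm" unfolding FM_def using Hm_herm Km_herm by auto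
  let ?n = "real CARD('n)"
  show ?thesis
  proof (rule generic_lip_norm[OF sub_herm herm_mat1 Leps_sn _ fFM FMh])
    show "\<forall>a\<in>herm. (L_eps d \<epsilon> a = 0) = (\<exists>t. a = t *\<^sub>R mat 1)" using Leps_ker by blast
    show "0 \<le> (D + cc) * (2 * ?n * ?n)" using D_nonneg cc_nonneg by simp
  next
    fix \<phi> \<psi> :: "complex^'n^'n \<Rightarrow> real" and A :: "complex^'n^'n" assume ph: "\<phi> \<in> state_space herm psd (mat 1)" and ps: "\<psi> \<in> state_space herm psd (mat 1)"
      and A: "A \<in> herm" and L: "L_eps d \<epsilon> A \<le> 1"
    have l1: "lin_on herm \<phi>" "\<phi> (mat 1) = 1" using ph unfolding state_space_def is_state_def lin_on_def by auto
    have l2: "lin_on herm \<psi>" "\<psi> (mat 1) = 1" using ps unfolding state_space_def is_state_def lin_on_def by auto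
    define t where "t = Re (A $ x0 $ x0)"
    define B where "B = A - t *\<^sub>R mat 1"
    have tm: "t *\<^sub>R mat 1 \<in> herm" using sub_herm herm_mat1 unfolding sub_def by blast
    have Bh: "B \<in> herm" unfolding B_def using lin_on_diff sub_herm A tm
      by (metis (no_types, lifting) diff_conv_add_uminus scaleR_minus1_left sub_def)
    have AB: "A = B + t *\<^sub>R mat 1" unfolding B_def by simp
    have ev: "\<xi> A = \<xi> B + t" if "lin_on herm \<xi>" "\<xi> (mat 1) = 1" for \<xi>
      using lin_add[OF that(1) Bh tm] lin_scale[OF that(1) herm_mat1, of t] that(2) AB by simp
    have Bb: "cmod (B $ p $ q) \<le> D + cc" for p q
    proof (cases "p = q")
      case True
      have "Im (A $ p $ p) = 0" using herm_sym[OF A, of p p] by (simp add: complex_eq_iff)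
      then have "cmod (B $ p $ p) = \<bar>Re (A $ p $ p) - t\<bar>" unfolding B_def by (simp add: mat_def cmod_eq_Re)
      also have "\<dots> = \<bar>diag_map A $ p - diag_map A $ x0\<bar>" unfolding t_def diag_map_def by simp
      also have "\<dots> \<le> lipschitz_seminorm d (diag_map A) * d p x0" by (rule LS_lip)
      also have "\<dots> \<le> 1 * d p x0" using Leps_ge_LS[of A] L dnn[of p x0] by (intro mult_right_mono) auto
      also have "\<dots> \<le> D + cc" using D_ge[of p] cc_nonneg by simp
      finally show ?thesis using True by simp
    next
      case False
      have "cmod (B $ p $ q) = cmod (A $ p $ q)" unfolding B_def using False by (simp add: mat_def)
      also have "\<dots> \<le> cc" by (rule Leps_off[OF L False])
      finally show ?thesis using D_nonneg by simp
    qed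
    have "\<bar>\<phi> A - \<psi> A\<bar> = \<bar>\<phi> B - \<psi> B\<bar>" using ev[OF l1] ev[OF l2] by simp
    also have "\<dots> \<le> (D + cc) * (\<Sum>p\<in>UNIV. \<Sum>q\<in>UNIV. \<bar>\<phi> (Hm p q) - \<psi> (Hm p q)\<bar> + \<bar>\<phi> (Km p q) - \<psi> (Km p q)\<bar>)"
      by (rule compM[OF l1(1) l2(1) Bh Bb])
    also have "\<dots> \<le> (D + cc) * (2 * ?n * ?n * (\<Sum>b\<in>FM. \<bar>\<phi> b - \<psi> b\<bar>))"
    proof (rule mult_left_mono)
      show "0 \<le> D + cc" using D_nonneg cc_nonneg by simp
      have "(\<Sum>p\<in>UNIV. \<Sum>q\<in>UNIV. \<bar>\<phi> (Hm p q) - \<psi> (Hm p q)\<bar> + \<bar>\<phi> (Km p q) - \<psi> (Km p q)\<bar>)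
        = (\<Sum>p\<in>UNIV. \<Sum>q\<in>UNIV. \<bar>\<phi> (Hm p q) - \<psi> (Hm p q)\<bar>) + (\<Sum>p\<in>UNIV. \<Sum>q\<in>UNIV. \<bar>\<phi> (Km p q) - \<psi> (Km p q)\<bar>)"
        by (simp add: sum.distrib)
      also have "\<dots> \<le> ?n * ?n * (\<Sum>b\<in>FM. \<bar>\<phi> b - \<psi> b\<bar>) + ?n * ?n * (\<Sum>b\<in>FM. \<bar>\<phi> b - \<psi> b\<bar>)"
        by (intro add_mono dsum_le_set[OF fFM] HF) simp_all
      finally show "(\<Sum>p\<in>UNIV. \<Sum>q\<in>UNIV. \<bar>\<phi> (Hm p q) - \<psi> (Hm p q)\<bar> + \<bar>\<phi> (Km p q) - \<psi> (Km p q)\<bar>)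
        \<le> 2 * ?n * ?n * (\<Sum>b\<in>FM. \<bar>\<phi> b - \<psi> b\<bar>)" by simp
    qed
    finally show "\<bar>\<phi> A - \<psi> A\<bar> \<le> (D + cc) * (2 * ?n * ?n) * (\<Sum>b\<in>FM. \<bar>\<phi> b - \<psi> b\<bar>)"
      by (simp add: mult.assoc)
  qed
qed

end

lemma prod_lin: fixes \<phi> :: "(real^'b::finite) \<times> (complex^'a::finite^'a) \<Rightarrow> real"
  assumes "lin_on (UNIV \<times> herm) \<phi>"
  shows "lin_on UNIV (\<lambda>g. \<phi> (g, 0))" "lin_on herm (\<lambda>B. \<phi> (0, B))"
proof -
  have z: "(0::complex^'a::finite^'a) \<in> herm" using sub_herm unfolding sub_def by blast
  show "lin_on UNIV (\<lambda>g. \<phi> (g, 0))" unfolding lin_on_def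
  proof (intro conjI ballI allI)
    fix x y :: "real^'b"
    have "\<phi> ((x, 0) + (y, 0)) = \<phi> (x, 0) + \<phi> (y, 0)" using assms z unfolding lin_on_def by blast
    then show "\<phi> (x + y, 0) = \<phi> (x, 0) + \<phi> (y, 0)" by simp
  next
    fix c and x :: "real^'b"
    have "\<phi> (c *\<^sub>R (x, 0)) = c * \<phi> (x, 0)" using assms z unfolding lin_on_def by blast
    then show "\<phi> (c *\<^sub>R x, 0) = c * \<phi> (x, 0)" by simp
  qed
  show "lin_on herm (\<lambda>B. \<phi> (0, B))" unfolding lin_on_def
  proof (intro conjI ballI allI)
    fix x y :: "complex^'a^'a" assume "x \<in> herm" "y \<in> herm"
    then have "\<phi> ((0, x) + (0, y)) = \<phi> (0, x) + \<phi> (0, y)" using assms unfolding lin_on_def by blast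
    then show "\<phi> (0, x + y) = \<phi> (0, x) + \<phi> (0, y)" by simp
  next
    fix c and x :: "complex^'a^'a" assume "x \<in> herm"
    then have "\<phi> (c *\<^sub>R (0, x)) = c * \<phi> (0, x)" using assms unfolding lin_on_def by blast
    then show "\<phi> (0, c *\<^sub>R x) = c * \<phi> (0, x)" by simp
  qed
qed

lemma sub_prod: "sub (UNIV \<times> (herm :: (complex^'a::finite^'a) set) :: ((real^'b::finite) \<times> _) set)"
  unfolding sub_def
proof (intro conjI ballI allI)
  show "0 \<in> (UNIV \<times> (herm :: (complex^'a::finite^'a) set) :: ((real^'b::finite) \<times> _) set)"
    using sub_herm unfolding sub_def zero_prod_def by blast
next
  fix x y :: "(real^'b) \<times> (complex^'a^'a)" assume "x \<in> UNIV \<times> herm" "y \<in> UNIV \<times> herm"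
  then have "snd x \<in> herm" "snd y \<in> herm" by auto
  then have "snd x + snd y \<in> herm" using sub_herm unfolding sub_def by blast
  then show "x + y \<in> UNIV \<times> herm" by (simp add: mem_Times_iff)
next
  fix c and x :: "(real^'b) \<times> (complex^'a^'a)" assume "x \<in> UNIV \<times> herm"
  then have "snd x \<in> herm" by auto
  then have "c *\<^sub>R snd x \<in> herm" using sub_herm unfolding sub_def by blast
  then show "c *\<^sub>R x \<in> UNIV \<times> herm" by (simp add: mem_Times_iff)
qed

context LE
begin

definition Nb :: "real \<Rightarrow> (real^'n) \<times> (complex^'n^'n) \<Rightarrow> real" where
  "Nb \<gamma> z = max (lipschitz_seminorm d (fst z)) (max (L_eps d \<epsilon> (snd z)) ((1 / \<gamma>) * norm (fst z - diag_map (snd z))))"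

lemma N_sn: assumes "\<gamma> > 0" shows "is_seminorm_on V (Nb \<gamma>)"
proof -
  have e: "Nb \<gamma> = (\<lambda>z. max (lipschitz_seminorm d (fst z)) (max (L_eps d \<epsilon> (snd z)) ((1 / \<gamma>) * norm (fst z - diag_map (snd z)))))"
    by (intro ext) (simp add: Nb_def)
  have p1: "fst z - diag_map (snd z) + (fst w - diag_map (snd w)) = fst (z + w) - diag_map (snd (z + w))"
    for z w :: "(real^'n) \<times> (complex^'n^'n)" by (simp add: diag_map_add algebra_simps)
  have p2: "fst (c *\<^sub>R z) - diag_map (snd (c *\<^sub>R z)) = c *\<^sub>R (fst z - diag_map (snd z))"
    for c and z :: "(real^'n) \<times> (complex^'n^'n)" by (simp add: diag_map_scale scaleR_diff_right)
  show ?thesis unfolding e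
    by (intro sn_max sn_comp[OF LS_seminorm] sn_comp[OF Leps_sn] sn_scale sn_comp[OF sn_norm])
      (use assms p1 p2 in \<open>simp_all\<close>)
qed

lemma N_ge: "lipschitz_seminorm d (fst z) \<le> Nb \<gamma> z" "L_eps d \<epsilon> (snd z) \<le> Nb \<gamma> z"
  "(1 / \<gamma>) * norm (fst z - diag_map (snd z)) \<le> Nb \<gamma> z"
  unfolding Nb_def by auto

lemma N_norm: assumes "\<gamma> > 0" "Nb \<gamma> z \<le> 1" shows "norm (fst z - diag_map (snd z)) \<le> \<gamma>"
proof -
  have "(1 / \<gamma>) * norm (fst z - diag_map (snd z)) \<le> 1" using N_ge(3)[of \<gamma> z] assms(2) by linarith
  then show ?thesis using assms(1) by (simp add: field_simps)
qed

lemma N_ker: assumes "\<gamma> > 0" "z \<in> UNIV \<times> herm"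
  shows "Nb \<gamma> z = 0 \<longleftrightarrow> (\<exists>t. z = t *\<^sub>R (unitC, mat 1))"
proof
  assume z0: "Nb \<gamma> z = 0"
  obtain f A where z: "z = (f, A)" by (cases z)
  have A: "A \<in> herm" using assms(2) z by simp
  have "L_eps d \<epsilon> A = 0" using N_ge(2)[of z \<gamma>] Leps_nonneg[of A] z0 z by simp
  then obtain t where t: "A = t *\<^sub>R mat 1" using Leps_ker[OF A] by blast
  have "(1 / \<gamma>) * norm (f - diag_map A) \<le> 0" using N_ge(3)[of \<gamma> z] z0 z by simp
  then have "norm (f - diag_map A) \<le> 0" using assms(1)
    by (metis divide_le_0_iff less_le_not_le mult_1 times_divide_eq_left)
  then have "f = diag_map A" by simp
  then have "f = t *\<^sub>R unitC" using t diag_map_tmat by simp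
  then show "\<exists>t. z = t *\<^sub>R (unitC, mat 1)" using z t by auto
next
  assume "\<exists>t. z = t *\<^sub>R (unitC, mat 1)"
  then obtain t where z: "z = (t *\<^sub>R unitC, t *\<^sub>R mat 1)" by auto
  show "Nb \<gamma> z = 0" unfolding Nb_def z using LS_const Leps_tmat diag_map_tmat by simp
qed

lemma N_lipnorm: assumes gp: "\<gamma> > 0"
  shows "is_lip_norm (UNIV \<times> herm) (sum_pos posC psd) (unitC, mat 1) (Nb \<gamma>)"
proof -
  define F where "F = (\<lambda>i. (eR i, 0 :: complex^'n^'n)) ` (UNIV :: 'n set)
     \<union> (\<lambda>(p,q). (0 :: real^'n, Hm p q)) ` (UNIV :: ('n \<times> 'n) set) \<union> (\<lambda>(p,q). (0 :: real^'n, Km p q)) ` UNIV"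
  have fF: "finite F" unfolding F_def by simp
  have inF: "(eR i, 0) \<in> F" "(0, Hm p q) \<in> F" "(0, Km p q) \<in> F" for i p q
    unfolding F_def by (auto intro: image_eqI[of _ _ "(p,q)"])
  have zh: "(0::complex^'n^'n) \<in> herm" using sub_herm unfolding sub_def by blast
  have FV: "F \<subseteq> UNIV \<times> herm" unfolding F_def using zh Hm_herm Km_herm by auto
  have e1: "(unitC, mat 1) \<in> UNIV \<times> (herm :: (complex^'n^'n) set)" using herm_mat1 by simp
  let ?n = "real CARD('n)"
  let ?C = "D * ?n + (D + \<gamma> + cc) * (2 * ?n * ?n)"
  show ?thesis
  proof (rule generic_lip_norm[OF sub_prod e1 N_sn[OF gp] _ fF FV])
    show "\<forall>a\<in>UNIV \<times> herm. (Nb \<gamma> a = 0) = (\<exists>t. a = t *\<^sub>R (unitC, mat 1))"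
    proof
      fix a :: "(real^'n) \<times> (complex^'n^'n)" assume "a \<in> UNIV \<times> herm"
      then show "(Nb \<gamma> a = 0) = (\<exists>t. a = t *\<^sub>R (unitC, mat 1))" by (rule N_ker[OF gp])
    qed
    show "0 \<le> ?C" using D_nonneg cc_nonneg gp by (intro add_nonneg_nonneg mult_nonneg_nonneg) auto
  next
    fix \<phi> \<psi> :: "(real^'n) \<times> (complex^'n^'n) \<Rightarrow> real" and z :: "(real^'n) \<times> (complex^'n^'n)"
    assume ph: "\<phi> \<in> state_space (UNIV \<times> herm) (sum_pos posC psd) (unitC, mat 1)"
      and ps: "\<psi> \<in> state_space (UNIV \<times> herm) (sum_pos posC psd) (unitC, mat 1)"
      and zV: "z \<in> UNIV \<times> herm" and L: "Nb \<gamma> z \<le> 1"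
    obtain f A where zz: "z = (f, A)" by (cases z)
    have A: "A \<in> herm" using zV zz by simp
    have l1: "lin_on (UNIV \<times> herm) \<phi>" "\<phi> (unitC, mat 1) = 1" using ph unfolding state_space_def is_state_def lin_on_def by auto
    have l2: "lin_on (UNIV \<times> herm) \<psi>" "\<psi> (unitC, mat 1) = 1" using ps unfolding state_space_def is_state_def lin_on_def by auto
    define t where "t = f $ x0"
    define g where "g = f - t *\<^sub>R unitC"
    define B where "B = A - t *\<^sub>R mat 1"
    have tm: "t *\<^sub>R mat 1 \<in> herm" using sub_herm herm_mat1 unfolding sub_def by blast
    have Bh: "B \<in> herm" unfolding B_def using lin_on_diff sub_herm A tm
      by (metis (no_types, lifting) diff_conv_add_uminus scaleR_minus1_left sub_def)
    have zd: "z = t *\<^sub>R (unitC, mat 1) + ((g, 0) + (0, B))" unfolding zz g_def B_def by simp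
    have ev: "\<xi> z = t + \<xi> (g, 0) + \<xi> (0, B)" if "lin_on (UNIV \<times> herm) \<xi>" "\<xi> (unitC, mat 1) = 1" for \<xi>
    proof -
      have m1: "(g, 0::complex^'n^'n) \<in> UNIV \<times> herm" "(0::real^'n, B) \<in> UNIV \<times> herm"
        "t *\<^sub>R (unitC, mat 1::complex^'n^'n) \<in> UNIV \<times> herm"
        using zh Bh tm by (auto simp: mem_Times_iff)
      have m2: "(g, 0::complex^'n^'n) + (0::real^'n, B) \<in> UNIV \<times> herm" using Bh by simp
      have "\<xi> z = \<xi> (t *\<^sub>R (unitC, mat 1)) + \<xi> ((g, 0) + (0, B))" unfolding zd using lin_add[OF that(1) m1(3) m2] .
      also have "\<dots> = t + (\<xi> (g, 0) + \<xi> (0, B))"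
        using lin_scale[OF that(1) e1, of t] that(2) lin_add[OF that(1) m1(1) m1(2)] by simp
      finally show ?thesis by simp
    qed
    have gb: "\<bar>g $ i\<bar> \<le> D" for i
    proof -
      have "\<bar>g $ i\<bar> = \<bar>f $ i - f $ x0\<bar>" unfolding g_def t_def unitC_def by simp
      also have "\<dots> \<le> lipschitz_seminorm d f * d i x0" by (rule LS_lip)
      also have "\<dots> \<le> 1 * d i x0" using N_ge(1)[of z \<gamma>] L zz dnn[of i x0] by (intro mult_right_mono) auto
      finally show ?thesis using D_ge[of i] by simp
    qed
    have LA: "L_eps d \<epsilon> A \<le> 1" using N_ge(2)[of z \<gamma>] L zz by simp
    have nrm: "norm (f - diag_map A) \<le> \<gamma>" using N_norm[OF gp L] zz by simp
    have Bb: "cmod (B $ p $ q) \<le> D + \<gamma> + cc" for p q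
    proof (cases "p = q")
      case True
      have "Im (A $ p $ p) = 0" using herm_sym[OF A, of p p] by (simp add: complex_eq_iff)
      then have "cmod (B $ p $ p) = \<bar>Re (A $ p $ p) - t\<bar>" unfolding B_def by (simp add: mat_def cmod_eq_Re)
      also have "\<dots> \<le> \<bar>diag_map A $ p - diag_map A $ x0\<bar> + \<bar>(f - diag_map A) $ x0\<bar>"
        unfolding t_def diag_map_def by simp
      also have "\<dots> \<le> lipschitz_seminorm d (diag_map A) * d p x0 + norm (f - diag_map A)"
        by (intro add_mono LS_lip component_le_norm_cart)
      also have "\<dots> \<le> 1 * d p x0 + \<gamma>"
        using Leps_ge_LS[of A] LA dnn[of p x0] nrm by (intro add_mono mult_right_mono) auto
      also have "\<dots> \<le> D + \<gamma> + cc" using D_ge[of p] cc_nonneg by simp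
      finally show ?thesis using True by simp
    next
      case False
      have "cmod (B $ p $ q) = cmod (A $ p $ q)" unfolding B_def using False by (simp add: mat_def)
      also have "\<dots> \<le> cc" by (rule Leps_off[OF LA False])
      finally show ?thesis using D_nonneg gp by simp
    qed
    let ?S = "\<Sum>b\<in>F. \<bar>\<phi> b - \<psi> b\<bar>"
    have "\<bar>\<phi> z - \<psi> z\<bar> = \<bar>(\<phi> (g, 0) - \<psi> (g, 0)) + (\<phi> (0, B) - \<psi> (0, B))\<bar>"
      using ev[OF l1] ev[OF l2] by simp
    also have "\<dots> \<le> \<bar>\<phi> (g, 0) - \<psi> (g, 0)\<bar> + \<bar>\<phi> (0, B) - \<psi> (0, B)\<bar>" by (rule abs_triangle_ineq)
    also have "\<dots> \<le> D * (\<Sum>i\<in>UNIV. \<bar>\<phi> (eR i, 0) - \<psi> (eR i, 0)\<bar>)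
        + (D + \<gamma> + cc) * (\<Sum>p\<in>UNIV. \<Sum>q\<in>UNIV. \<bar>\<phi> (0, Hm p q) - \<psi> (0, Hm p q)\<bar> + \<bar>\<phi> (0, Km p q) - \<psi> (0, Km p q)\<bar>)"
      by (intro add_mono compC[OF prod_lin(1)[OF l1(1)] prod_lin(1)[OF l2(1)] gb]
          compM[OF prod_lin(2)[OF l1(1)] prod_lin(2)[OF l2(1)] Bh Bb])
    also have "\<dots> \<le> D * (?n * ?S) + (D + \<gamma> + cc) * (2 * ?n * ?n * ?S)"
    proof (intro add_mono mult_left_mono)
      show "(\<Sum>i\<in>UNIV. \<bar>\<phi> (eR i, 0) - \<psi> (eR i, 0)\<bar>) \<le> ?n * ?S"
        using sum_le_set[OF fF, of UNIV "\<lambda>i. (eR i, 0)" "\<lambda>b. \<bar>\<phi> b - \<psi> b\<bar>"] inF by simp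
      have "(\<Sum>p\<in>UNIV. \<Sum>q\<in>UNIV. \<bar>\<phi> (0, Hm p q) - \<psi> (0, Hm p q)\<bar> + \<bar>\<phi> (0, Km p q) - \<psi> (0, Km p q)\<bar>)
        = (\<Sum>p\<in>UNIV. \<Sum>q\<in>UNIV. \<bar>\<phi> (0, Hm p q) - \<psi> (0, Hm p q)\<bar>) + (\<Sum>p\<in>UNIV. \<Sum>q\<in>UNIV. \<bar>\<phi> (0, Km p q) - \<psi> (0, Km p q)\<bar>)"
        by (simp add: sum.distrib)
      also have "\<dots> \<le> ?n * ?n * ?S + ?n * ?n * ?S"
        by (intro add_mono dsum_le_set[OF fF] inF) simp_all
      finally show "(\<Sum>p\<in>UNIV. \<Sum>q\<in>UNIV. \<bar>\<phi> (0, Hm p q) - \<psi> (0, Hm p q)\<bar> + \<bar>\<phi> (0, Km p q) - \<psi> (0, Km p q)\<bar>)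
        \<le> 2 * ?n * ?n * ?S" by simp
    qed (use D_nonneg cc_nonneg gp in simp_all)
    also have "\<dots> = ?C * ?S" by (simp add: algebra_simps)
    finally show "\<bar>\<phi> z - \<psi> z\<bar> \<le> ?C * ?S" .
  qed
qed

end

context LE
begin

lemma Nb_dg: "Nb \<gamma> (f, dg f) = lipschitz_seminorm d f"
proof -
  have "L_eps d \<epsilon> (dg f) = lipschitz_seminorm d f"
    unfolding Leps_eq diag_map_dg ODN_dg using LS_nonneg[of d f] by simp
  then show ?thesis unfolding Nb_def using LS_nonneg[of d f] by (simp add: diag_map_dg)
qed

lemma Nb_diag: "Nb \<gamma> (diag_map A, A) = L_eps d \<epsilon> A"
  unfolding Nb_def using Leps_ge_LS[of A] Leps_nonneg[of A] by simp

lemma N_adm: assumes gp: "\<gamma> > 0"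
  shows "admissible UNIV posC unitC (lipschitz_seminorm d) herm psd (mat 1) (L_eps d \<epsilon>) (Nb \<gamma>)"
  unfolding admissible_def
proof (intro conjI ballI)
  show "is_lip_norm (UNIV \<times> herm) (sum_pos posC psd) (unitC, mat 1) (Nb \<gamma>)" by (rule N_lipnorm[OF gp])
next
  fix a :: "real^'n"
  have "Inf {Nb \<gamma> (a, b) |b. b \<in> herm} = lipschitz_seminorm d a"
  proof (rule cInf_eq_minimum)
    show "lipschitz_seminorm d a \<in> {Nb \<gamma> (a, b) |b. b \<in> herm}"
      using dg_herm[of a] Nb_dg[of \<gamma> a] by force
  next
    fix x assume "x \<in> {Nb \<gamma> (a, b) |b. b \<in> herm}"
    then obtain b where "x = Nb \<gamma> (a, b)" by blast
    then show "lipschitz_seminorm d a \<le> x" using N_ge(1)[of "(a, b)" \<gamma>] by simp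
  qed
  then show "lipschitz_seminorm d a = Inf {Nb \<gamma> (a, b) |b. b \<in> herm}" by simp
next
  fix b :: "complex^'n^'n" assume "b \<in> herm"
  have "Inf {Nb \<gamma> (a, b) |a. a \<in> UNIV} = L_eps d \<epsilon> b"
  proof (rule cInf_eq_minimum)
    have "Nb \<gamma> (diag_map b, b) \<in> {Nb \<gamma> (a, b) |a. a \<in> UNIV}" by blast
    then show "L_eps d \<epsilon> b \<in> {Nb \<gamma> (a, b) |a. a \<in> UNIV}" using Nb_diag[of \<gamma> b] by simp
  next
    fix x assume "x \<in> {Nb \<gamma> (a, b) |a. a \<in> UNIV}"
    then obtain a where "x = Nb \<gamma> (a, b)" by blast
    then show "L_eps d \<epsilon> b \<le> x" using N_ge(2)[of "(a, b)" \<gamma>] by simp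
  qed
  then show "L_eps d \<epsilon> b = Inf {Nb \<gamma> (a, b) |a. a \<in> UNIV}" by simp
qed

lemma part1: assumes gp: "\<gamma> > 0" and st: "is_state UNIV posC unitC \<mu>"
  shows "lip_dist (UNIV \<times> herm) (Nb \<gamma>) (embed_fst UNIV herm \<mu>)
     (embed_snd UNIV herm (\<lambda>A. if A \<in> herm then \<mu> (diag_map A) else 0)) \<le> ereal \<gamma>"
  unfolding lip_dist_def
proof (rule SUP_least)
  fix z :: "(real^'n) \<times> (complex^'n^'n)" assume "z \<in> {a \<in> UNIV \<times> herm. Nb \<gamma> a \<le> 1}"
  then have zV: "z \<in> UNIV \<times> herm" and L: "Nb \<gamma> z \<le> 1" by auto
  obtain f A where zz: "z = (f, A)" by (cases z)
  have A: "A \<in> herm" using zV zz by simp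
  have lin: "lin_on UNIV \<mu>" using stateC[OF st] by simp
  have "\<bar>embed_fst UNIV herm \<mu> z - embed_snd UNIV herm (\<lambda>A. if A \<in> herm then \<mu> (diag_map A) else 0) z\<bar>
     = \<bar>\<mu> f - \<mu> (diag_map A)\<bar>" using zz A by (simp add: embed_fst_def embed_snd_def)
  also have "\<dots> = \<bar>\<mu> (f - diag_map A)\<bar>" using lin_on_diff[OF lin _ _ sub_UNIV] by simp
  also have "\<dots> \<le> norm (f - diag_map A)" by (rule stateC_bound[OF st])
  also have "\<dots> \<le> \<gamma>" using N_norm[OF gp L] zz by simp
  finally show "ereal \<bar>embed_fst UNIV herm \<mu> z - embed_snd UNIV herm (\<lambda>A. if A \<in> herm then \<mu> (diag_map A) else 0) z\<bar> \<le> ereal \<gamma>"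
    by simp
qed

lemma part2: assumes gp: "\<gamma> > 0" and st: "is_state herm psd (mat 1) \<nu>"
  shows "lip_dist (UNIV \<times> herm) (Nb \<gamma>) (embed_fst UNIV herm (\<lambda>f. \<nu> (dg f)))
     (embed_snd UNIV herm \<nu>) \<le> ereal (\<epsilon> + \<gamma>)"
  unfolding lip_dist_def
proof (rule SUP_least)
  fix z :: "(real^'n) \<times> (complex^'n^'n)" assume "z \<in> {a \<in> UNIV \<times> herm. Nb \<gamma> a \<le> 1}"
  then have zV: "z \<in> UNIV \<times> herm" and L: "Nb \<gamma> z \<le> 1" by auto
  obtain f A where zz: "z = (f, A)" by (cases z)
  have A: "A \<in> herm" using zV zz by simp
  have mst: "is_state UNIV posC unitC (\<lambda>f. \<nu> (dg f))" by (rule mu_of_nu[OF st])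
  have mlin: "lin_on UNIV (\<lambda>f. \<nu> (dg f))" using stateC[OF mst] by simp
  have nlin: "lin_on herm \<nu>" using st by (rule state_lin)
  have LA: "L_eps d \<epsilon> A \<le> 1" using N_ge(2)[of z \<gamma>] L zz by simp
  have e1: "\<nu> A = \<nu> (A - dg (diag_map A)) + \<nu> (dg (diag_map A))"
    using lin_on_diff[OF nlin A dg_herm sub_herm] by simp
  have e2: "\<nu> (dg (diag_map A)) - \<nu> (dg f) = \<nu> (dg (diag_map A - f))"
    using lin_on_diff[OF mlin _ _ sub_UNIV, of "diag_map A" f] by simp
  have "\<bar>embed_fst UNIV herm (\<lambda>f. \<nu> (dg f)) z - embed_snd UNIV herm \<nu> z\<bar> = \<bar>\<nu> (dg f) - \<nu> A\<bar>"
    using zz A by (simp add: embed_fst_def embed_snd_def)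
  also have "\<dots> = \<bar>\<nu> (A - dg (diag_map A)) + \<nu> (dg (diag_map A - f))\<bar>" using e1 e2 by (simp add: abs_minus_commute)
  also have "\<dots> \<le> \<bar>\<nu> (A - dg (diag_map A))\<bar> + \<bar>\<nu> (dg (diag_map A - f))\<bar>" by (rule abs_triangle_ineq)
  also have "\<dots> \<le> \<epsilon> + norm (diag_map A - f)"
    by (intro add_mono Leps_state_off[OF st A LA] stateC_bound[OF mst])
  also have "norm (diag_map A - f) = norm (f - diag_map A)" by (rule norm_minus_commute)
  also have "\<dots> \<le> \<gamma>" using N_norm[OF gp L] zz by simp
  finally show "ereal \<bar>embed_fst UNIV herm (\<lambda>f. \<nu> (dg f)) z - embed_snd UNIV herm \<nu> z\<bar> \<le> ereal (\<epsilon> + \<gamma>)"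
    by simp
qed

lemma haus: assumes gp: "\<gamma> > 0"
  shows "hausdorff_dist (lip_dist (UNIV \<times> herm) (Nb \<gamma>))
           (embed_fst UNIV herm ` state_space UNIV posC unitC)
           (embed_snd UNIV herm ` state_space herm psd (mat 1)) \<le> ereal (\<epsilon> + \<gamma>)"
  unfolding hausdorff_dist_def
proof (rule max.boundedI)
  show "(SUP \<mu>\<in>embed_fst UNIV herm ` state_space UNIV posC unitC.
          INF \<nu>\<in>embed_snd UNIV herm ` state_space herm psd (mat 1). lip_dist (UNIV \<times> herm) (Nb \<gamma>) \<mu> \<nu>) \<le> ereal (\<epsilon> + \<gamma>)"
  proof (rule SUP_least)
    fix \<mu>' :: "(real^'n) \<times> (complex^'n^'n) \<Rightarrow> real" assume "\<mu>' \<in> embed_fst UNIV herm ` state_space UNIV posC unitC"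
    then obtain \<mu> where st: "is_state UNIV posC unitC \<mu>" and m: "\<mu>' = embed_fst UNIV herm \<mu>"
      unfolding state_space_def by blast
    let ?\<nu> = "\<lambda>A. if A \<in> herm then \<mu> (diag_map A) else 0"
    have "embed_snd UNIV herm ?\<nu> \<in> embed_snd UNIV herm ` state_space herm psd (mat 1)"
      using nu_of_mu[OF st] unfolding state_space_def by blast
    then have "(INF \<nu>\<in>embed_snd UNIV herm ` state_space herm psd (mat 1). lip_dist (UNIV \<times> herm) (Nb \<gamma>) \<mu>' \<nu>)
        \<le> lip_dist (UNIV \<times> herm) (Nb \<gamma>) \<mu>' (embed_snd UNIV herm ?\<nu>)" by (rule INF_lower)
    also have "\<dots> \<le> ereal \<gamma>" unfolding m by (rule part1[OF gp st])
    also have "\<dots> \<le> ereal (\<epsilon> + \<gamma>)" using epos by simp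
    finally show "(INF \<nu>\<in>embed_snd UNIV herm ` state_space herm psd (mat 1). lip_dist (UNIV \<times> herm) (Nb \<gamma>) \<mu>' \<nu>) \<le> ereal (\<epsilon> + \<gamma>)" .
  qed
next
  show "(SUP \<nu>\<in>embed_snd UNIV herm ` state_space herm psd (mat 1).
          INF \<mu>\<in>embed_fst UNIV herm ` state_space UNIV posC unitC. lip_dist (UNIV \<times> herm) (Nb \<gamma>) \<mu> \<nu>) \<le> ereal (\<epsilon> + \<gamma>)"
  proof (rule SUP_least)
    fix \<nu>' :: "(real^'n) \<times> (complex^'n^'n) \<Rightarrow> real" assume "\<nu>' \<in> embed_snd UNIV herm ` state_space herm psd (mat 1)"
    then obtain \<nu> where st: "is_state herm psd (mat 1) \<nu>" and m: "\<nu>' = embed_snd UNIV herm \<nu>"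
      unfolding state_space_def by blast
    let ?\<mu> = "\<lambda>f. \<nu> (dg f)"
    have "embed_fst UNIV herm ?\<mu> \<in> embed_fst UNIV herm ` state_space UNIV posC unitC"
      using mu_of_nu[OF st] unfolding state_space_def by blast
    then have "(INF \<mu>\<in>embed_fst UNIV herm ` state_space UNIV posC unitC. lip_dist (UNIV \<times> herm) (Nb \<gamma>) \<mu> \<nu>')
        \<le> lip_dist (UNIV \<times> herm) (Nb \<gamma>) (embed_fst UNIV herm ?\<mu>) \<nu>'" by (rule INF_lower)
    also have "\<dots> \<le> ereal (\<epsilon> + \<gamma>)" unfolding m by (rule part2[OF gp st])
    finally show "(INF \<mu>\<in>embed_fst UNIV herm ` state_space UNIV posC unitC. lip_dist (UNIV \<times> herm) (Nb \<gamma>) \<mu> \<nu>') \<le> ereal (\<epsilon> + \<gamma>)" .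
  qed
qed

lemma distq: "dist_q UNIV posC unitC (lipschitz_seminorm d) herm psd (mat 1) (L_eps d \<epsilon>) \<le> ereal \<epsilon>"
proof (rule ereal_le_epsilon2)
  fix \<gamma> :: real assume gp: "0 < \<gamma>"
  have "dist_q UNIV posC unitC (lipschitz_seminorm d) herm psd (mat 1) (L_eps d \<epsilon>)
     \<le> hausdorff_dist (lip_dist (UNIV \<times> herm) (Nb \<gamma>))
           (embed_fst UNIV herm ` state_space UNIV posC unitC)
           (embed_snd UNIV herm ` state_space herm psd (mat 1))"
    unfolding dist_q_def by (rule INF_lower) (simp add: N_adm[OF gp])
  also have "\<dots> \<le> ereal (\<epsilon> + \<gamma>)" by (rule haus[OF gp])
  finally show "dist_q UNIV posC unitC (lipschitz_seminorm d) herm psd (mat 1) (L_eps d \<epsilon>) \<le> ereal \<epsilon> + ereal \<gamma>"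
    by simp
qed

end

theorem mainTheorem5:
  fixes d :: "'n::finite \<Rightarrow> 'n \<Rightarrow> real" and \<epsilon> :: real
  assumes "\<forall>x y. d x y = 0 \<longleftrightarrow> x = y"
    and "\<forall>x y. d x y = d y x"
    and "\<forall>x y z. d x z \<le> d x y + d y z"
    and "\<epsilon> > 0"
  shows "is_lip_norm herm psd (mat 1) (L_eps d \<epsilon>) \<and>
         dist_q UNIV posC unitC (lipschitz_seminorm d) herm psd (mat 1) (L_eps d \<epsilon>) \<le> ereal \<epsilon>"
proof -
  interpret LE d \<epsilon> by unfold_locales (use assms in auto)
  show ?thesis using lipnorm_Leps distq by simp
qed

end
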